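(* For real $\lambda$ such that the defining integrals converge absolutely (in particular for all $\lambda\ge0$), let $$I_n(\lambda)=\int_{0<x_1<\cdots<x_n<1}\prod_{1\le i<j\le n}|x_i-x_j|^{\lambda 2^{j-i}}\,dx,\qquad J_n(\lambda)=\int_{0<x_1<\cdots<x_n<1}\prod_{1\le i<j\le n}|x_i-x_j|^{\lambda 2^{n-(j-i)}}\,dx.$$ Then $$I_2(\lambda)=J_2(\lambda)=\frac{1}{(1+2\lambda)(2+2\lambda)},\qquad I_3(\lambda)=\frac{1}{(2+8\lambda)(3+8\lambda)}\frac{\Gamma(1+2\lambda)^2}{\Gamma(2+4\lambda)},$$ $$I_4(\lambda)=\frac{1}{(3+22\lambda)(4+22\lambda)}\frac{\Gamma(1+2\lambda)^2}{\Gamma(2+4\lambda)}\frac{\Gamma(1+2\lambda)\Gamma(2+8\lambda)}{\Gamma(3+10\lambda)}\,{}_3F_2(-4\lambda,1+2\lambda,2+8\lambda;2+4\lambda,3+10\lambda;1),$$ $$J_3(\lambda)=\frac{1}{(2+10\lambda)(3+10\lambda)}\frac{\Gamma(1+4\lambda)^2}{\Gamma(2+8\lambda)},$$ $$J_4(\lambda)=\frac{1}{(3+34\lambda)(4+34\lambda)}\frac{\Gamma(1+8\lambda)^2}{\Gamma(2+16\lambda)}\frac{\Gamma(1+8\lambda)\Gamma(2+20\lambda)}{\Gamma(3+28\lambda)}\,{}_3F_2(-4\lambda,1+8\lambda,2+20\lambda;2+16\lambda,3+28\lambda;1).$$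
   Context: ${}_3F_2(a_1,a_2,a_3;b_1,b_2;z)$ denotes the generalized hypergeometric function $\sum_{k\ge0}\frac{(a_1)_k(a_2)_k(a_3)_k}{(b_1)_k(b_2)_k}\frac{z^k}{k!}$. *)

theory Defs
  imports "HOL-Analysis.Analysis"
begin

text \<open>Points of R^n are represented as extensional functions on the index set {0..<n}
  (indices shifted from 1..n to 0..n-1), with the product Lebesgue measure.\<close>

definition cube_measure :: "nat \<Rightarrow> (nat \<Rightarrow> real) measure" where
  "cube_measure n = (\<Pi>\<^sub>M i\<in>{..<n}. lborel)"

definition ordered_simplex :: "nat \<Rightarrow> (nat \<Rightarrow> real) set" where
  "ordered_simplex n = {x \<in> space (cube_measure n).
      (\<forall>i<n. 0 < x i \<and> x i < 1) \<and> (\<forall>i j. i < j \<and> j < n \<longrightarrow> x i < x j)}"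

definition pair_weight :: "nat \<Rightarrow> (nat \<Rightarrow> nat \<Rightarrow> real) \<Rightarrow> (nat \<Rightarrow> real) \<Rightarrow> real" where
  "pair_weight n e x = (\<Prod>(i,j)\<in>{(i,j). i < j \<and> j < n}. \<bar>x i - x j\<bar> powr e i j)"

definition I_exp :: "real \<Rightarrow> nat \<Rightarrow> nat \<Rightarrow> nat \<Rightarrow> real" where
  "I_exp lam n i j = lam * 2 ^ (j - i)"

definition J_exp :: "real \<Rightarrow> nat \<Rightarrow> nat \<Rightarrow> nat \<Rightarrow> real" where
  "J_exp lam n i j = lam * 2 ^ (n - (j - i))"

definition simplex_integrable :: "nat \<Rightarrow> (nat \<Rightarrow> nat \<Rightarrow> real) \<Rightarrow> bool" where
  "simplex_integrable n e = set_integrable (cube_measure n) (ordered_simplex n) (pair_weight n e)"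

definition simplex_integral :: "nat \<Rightarrow> (nat \<Rightarrow> nat \<Rightarrow> real) \<Rightarrow> real" where
  "simplex_integral n e = (LINT x:ordered_simplex n|cube_measure n. pair_weight n e x)"

definition I_int :: "nat \<Rightarrow> real \<Rightarrow> real" where
  "I_int n lam = simplex_integral n (I_exp lam n)"

definition J_int :: "nat \<Rightarrow> real \<Rightarrow> real" where
  "J_int n lam = simplex_integral n (J_exp lam n)"

definition hyp3F2 :: "real \<Rightarrow> real \<Rightarrow> real \<Rightarrow> real \<Rightarrow> real \<Rightarrow> real \<Rightarrow> real" where
  "hyp3F2 a1 a2 a3 b1 b2 z =
     (\<Sum>k. pochhammer a1 k * pochhammer a2 k * pochhammer a3 k /
           (pochhammer b1 k * pochhammer b2 k) * z ^ k / fact k)"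

end

theory Submission
  imports Defs
begin

lemma beta01_pos:
  fixes p q :: real
  assumes "p > -1" "q > -1"
  shows "(\<integral>\<^sup>+t. ennreal (indicator {0<..<1} t * (t powr p * (1-t) powr q)) \<partial>lborel)
         = ennreal (Beta (p+1) (q+1))"
proof -
  have "((\<lambda>t. t powr (p+1 - 1) * (1 - t) powr (q+1 - 1)) has_integral Beta (p+1) (q+1)) {0..1}"
    using assms by (intro has_integral_Beta_real) auto
  then have "((\<lambda>t. t powr p * (1 - t) powr q) has_integral Beta (p+1) (q+1)) {0<..<1}"
    by (simp add: has_integral_Icc_iff_Ioo)
  from nn_integral_has_integral_lebesgue[OF _ this] show ?thesis by simp
qed

lemma inv_div_half:
  "(\<integral>\<^sup>+t. ennreal (indicator {0<..<1/2} t * (1/t)) \<partial>lborel) = \<infinity>"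
proof (rule ccontr)
  assume "(\<integral>\<^sup>+t. ennreal (indicator {0<..<1/2} t * (1/t)) \<partial>lborel) \<noteq> \<infinity>"
  then obtain r where r: "(\<integral>\<^sup>+t. ennreal (indicator {0<..<1/2} t * (1/t)) \<partial>lborel) = ennreal r" "r \<ge> 0"
    by (metis ennreal_cases infinity_ennreal_def)
  define e :: real where "e = (1/4) * exp (-(r+1))"
  have e: "0 < e" "e < 1/4"
    using r(2) unfolding e_def by auto
  have "((\<lambda>t. 1/t) has_integral (ln (1/4) - ln e)) {e..1/4}"
    using e
    by (intro fundamental_theorem_of_calculus)
       (auto intro!: derivative_eq_intros simp flip: has_real_derivative_iff_has_vector_derivative
             simp: field_simps)
  from nn_integral_has_integral_lebesgue[OF _ this] e
  have 1: "(\<integral>\<^sup>+t. ennreal (indicator {e..1/4} t * (1/t)) \<partial>lborel) = ennreal (ln (1/4) - ln e)"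
    by simp
  have "(\<integral>\<^sup>+t. ennreal (indicator {e..1/4} t * (1/t)) \<partial>lborel)
        \<le> (\<integral>\<^sup>+t. ennreal (indicator {0<..<1/2} t * (1/t)) \<partial>lborel)"
    using e by (intro nn_integral_mono) (auto simp: indicator_def)
  with 1 r have "ln (1/4) - ln e \<le> r" by simp
  moreover have "ln (1/4) - ln e = r + 1"
    unfolding e_def by (simp add: ln_div)
  ultimately show False by simp
qed

lemma beta01_inf_p:
  fixes p q :: real
  assumes "p \<le> -1"
  shows "(\<integral>\<^sup>+t. ennreal (indicator {0<..<1} t * (t powr p * (1-t) powr q)) \<partial>lborel) = \<infinity>"
proof -
  define m where "m = min 1 ((1/2) powr q)"
  have m: "m > 0" unfolding m_def by simp
  have bnd: "m * (1/t) \<le> t powr p * (1-t) powr q" if t: "0 < t" "t < 1/2" for t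
  proof -
    have "1/t = t powr (-1)" using t by (simp add: powr_minus_divide)
    also have "\<dots> \<le> t powr p" using t assms by (intro powr_mono') auto
    finally have a: "1/t \<le> t powr p" .
    have b: "m \<le> (1-t) powr q"
    proof (cases "q \<ge> 0")
      case True
      have "(1/2) powr q \<le> (1-t) powr q" using t True by (intro powr_mono2) auto
      then show ?thesis unfolding m_def by linarith
    next
      case False
      have "(1-t) powr 0 \<le> (1-t) powr q" using t False by (intro powr_mono') auto
      then show ?thesis using t unfolding m_def by simp
    qed
    have "m * (1/t) \<le> (1-t) powr q * t powr p"
      using a b m t by (intro mult_mono) auto
    then show ?thesis by (simp add: mult.commute)
  qed
  have "(\<integral>\<^sup>+t. ennreal (indicator {0<..<1/2} t * (1/t)) \<partial>lborel) * ennreal m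
      = (\<integral>\<^sup>+t. ennreal (indicator {0<..<1/2} t * (1/t)) * ennreal m \<partial>lborel)"
    by (rule nn_integral_multc[symmetric]) measurable
  also have "\<dots> \<le> (\<integral>\<^sup>+t. ennreal (indicator {0<..<1} t * (t powr p * (1-t) powr q)) \<partial>lborel)"
  proof (intro nn_integral_mono)
    fix t :: real
    show "ennreal (indicator {0<..<1/2} t * (1/t)) * ennreal m
          \<le> ennreal (indicator {0<..<1} t * (t powr p * (1-t) powr q))"
    proof (cases "0 < t \<and> t < 1/2")
      case True
      then have "ennreal (indicator {0<..<1/2} t * (1/t)) * ennreal m = ennreal (m * (1/t))"
        using m by (simp add: ennreal_mult'[symmetric] indicator_def mult.commute)
      also have "\<dots> \<le> ennreal (indicator {0<..<1} t * (t powr p * (1-t) powr q))"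
        using True bnd[of t] by (intro ennreal_leI) (auto simp: indicator_def)
      finally show ?thesis .
    next
      case False
      then show ?thesis by (auto simp: indicator_def)
    qed
  qed
  finally show ?thesis using m inv_div_half by (simp add: ennreal_top_mult top_unique)
qed

lemma beta01_sym:
  fixes p q :: real
  shows "(\<integral>\<^sup>+t. ennreal (indicator {0<..<1} t * (t powr p * (1-t) powr q)) \<partial>lborel)
       = (\<integral>\<^sup>+t. ennreal (indicator {0<..<1} t * (t powr q * (1-t) powr p)) \<partial>lborel)"
proof -
  have "(\<integral>\<^sup>+t. ennreal (indicator {0<..<1} t * (t powr p * (1-t) powr q)) \<partial>lborel)
     = ennreal \<bar>-1\<bar> * (\<integral>\<^sup>+t. ennreal (indicator {0<..<1} (1 + (-1) * t) * ((1 + (-1) * t) powr p * (1-(1 + (-1) * t)) powr q)) \<partial>lborel)"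
    by (rule nn_integral_real_affine) auto
  also have "\<dots> = (\<integral>\<^sup>+t. ennreal (indicator {0<..<1} t * (t powr q * (1-t) powr p)) \<partial>lborel)"
    by (auto intro!: nn_integral_cong simp: indicator_def mult.commute)
  finally show ?thesis .
qed

lemma beta01:
  fixes p q :: real
  shows "(\<integral>\<^sup>+t. ennreal (indicator {0<..<1} t * (t powr p * (1-t) powr q)) \<partial>lborel)
         = (if p > -1 \<and> q > -1 then ennreal (Beta (p+1) (q+1)) else \<infinity>)"
proof (cases "p > -1 \<and> q > -1")
  case True then show ?thesis using beta01_pos by simp
next
  case False
  then show ?thesis
  proof (cases "p \<le> -1")
    case True then show ?thesis using beta01_inf_p by simp
  next
    case False
    with \<open>\<not> (p > -1 \<and> q > -1)\<close> have "q \<le> -1" by auto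
    then show ?thesis using beta01_inf_p[of q p] beta01_sym[of p q] by simp
  qed
qed

lemma beta_nn:
  fixes a b p q :: real
  assumes ab: "a < b"
  shows "(\<integral>\<^sup>+x. ennreal (indicator {a<..<b} x * ((x-a) powr p * (b-x) powr q)) \<partial>lborel)
         = (if p > -1 \<and> q > -1 then ennreal ((b-a) powr (p+q+1) * Beta (p+1) (q+1)) else \<infinity>)"
proof -
  have "(\<integral>\<^sup>+x. ennreal (indicator {a<..<b} x * ((x-a) powr p * (b-x) powr q)) \<partial>lborel)
     = ennreal \<bar>b-a\<bar> * (\<integral>\<^sup>+x. ennreal (indicator {a<..<b} (a + (b-a)*x) * (((a + (b-a)*x)-a) powr p * (b-(a + (b-a)*x)) powr q)) \<partial>lborel)"
    using ab by (intro nn_integral_real_affine) auto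
  also have "(\<integral>\<^sup>+x. ennreal (indicator {a<..<b} (a + (b-a)*x) * (((a + (b-a)*x)-a) powr p * (b-(a + (b-a)*x)) powr q)) \<partial>lborel)
     = (\<integral>\<^sup>+x. ennreal ((b-a) powr (p+q)) * ennreal (indicator {0<..<1} x * (x powr p * (1-x) powr q)) \<partial>lborel)"
  proof (intro nn_integral_cong)
    fix x :: real
    have h1: "(a < a+(b-a)*x) = (0 < x)" using ab by (simp add: zero_less_mult_iff)
    have h2: "(a+(b-a)*x < b) = (x < 1)"
    proof -
      have "(a+(b-a)*x < b) = ((b-a)*x < (b-a)*1)" by auto
      also have "\<dots> = (x < 1)" using ab by (intro mult_less_cancel_left_pos) auto
      finally show ?thesis .
    qed
    show "ennreal (indicator {a<..<b} (a + (b-a)*x) * (((a + (b-a)*x)-a) powr p * (b-(a + (b-a)*x)) powr q))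
        = ennreal ((b-a) powr (p+q)) * ennreal (indicator {0<..<1} x * (x powr p * (1-x) powr q))"
    proof (cases "0 < x \<and> x < 1")
      case True
      have e1: "(a + (b-a)*x)-a = (b-a)*x" by simp
      have e2: "b-(a + (b-a)*x) = (b-a)*(1-x)" by (simp add: algebra_simps)
      have "indicator {a<..<b} (a + (b-a)*x) * (((a + (b-a)*x)-a) powr p * (b-(a + (b-a)*x)) powr q)
          = (b-a) powr (p+q) * (indicator {0<..<1} x * (x powr p * (1-x) powr q))"
        using True h1 h2 ab unfolding e1 e2
        by (simp add: indicator_def powr_mult powr_add)
      then show ?thesis using True ab by (simp add: ennreal_mult'[symmetric] indicator_def)
    next
      case False
      then show ?thesis using h1 h2 by (auto simp: indicator_def)
    qed
  qed
  also have "\<dots> = ennreal ((b-a) powr (p+q)) * (\<integral>\<^sup>+x. ennreal (indicator {0<..<1} x * (x powr p * (1-x) powr q)) \<partial>lborel)"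
    by (rule nn_integral_cmult) measurable
  also have "\<dots> = ennreal ((b-a) powr (p+q)) * (if p > -1 \<and> q > -1 then ennreal (Beta (p+1) (q+1)) else \<infinity>)"
    by (simp only: beta01)
  finally have eq: "(\<integral>\<^sup>+x. ennreal (indicator {a<..<b} x * ((x-a) powr p * (b-x) powr q)) \<partial>lborel)
      = ennreal \<bar>b-a\<bar> * (ennreal ((b-a) powr (p+q)) * (if p > -1 \<and> q > -1 then ennreal (Beta (p+1) (q+1)) else \<infinity>))" .
  have X: "(b-a) powr (p+q) > 0" using ab by simp
  have pw: "(b-a) powr (p+q+1) = (b-a) * (b-a) powr (p+q)" using ab by (simp add: powr_add)
  show ?thesis
  proof (cases "p > -1 \<and> q > -1")
    case True
    have Bp: "Beta (p+1) (q+1) > 0" unfolding Beta_def using True by simp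
    show ?thesis unfolding eq using True Bp X ab pw
      by (simp add: ennreal_mult[symmetric] mult.assoc)
  next
    case False
    then have i1: "(if p > -1 \<and> q > -1 then ennreal (Beta (p+1) (q+1)) else \<infinity>) = \<infinity>" by simp
    from False have i2: "(if p > -1 \<and> q > -1 then ennreal ((b-a) powr (p+q+1) * Beta (p+1) (q+1)) else \<infinity>) = \<infinity>" by simp
    show ?thesis unfolding eq i1 i2 using X ab by (simp add: ennreal_mult_top)
  qed
qed

lemma notnp: "(x::real) > 0 \<Longrightarrow> x \<notin> \<int>\<^sub>\<le>\<^sub>0"
  by (auto elim!: nonpos_Ints_cases)

lemma Beta_1_left: "(s::real) > 0 \<Longrightarrow> Beta 1 s = 1/s"
proof -
  assume s: "s > 0"
  have g: "Gamma s > 0" using s by simp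
  have g': "Gamma s \<noteq> 0" using g by simp
  show ?thesis unfolding Beta_def using Gamma_plus1[OF notnp[OF s]] g' s
    by (simp add: add.commute field_simps)
qed

lemma Beta_1_right: "(s::real) > 0 \<Longrightarrow> Beta s 1 = 1/s"
  using Beta_1_left Beta_commute by metis

lemma out2:
  fixes C r :: real
  assumes C: "C > 0"
  shows "(\<integral>\<^sup>+y. \<integral>\<^sup>+x. ennreal (if 0 < x \<and> x < y \<and> y < 1 then C * (y-x) powr r else 0) \<partial>lborel \<partial>lborel)
       = (if r > -1 then ennreal (C / ((r+1)*(r+2))) else \<infinity>)"
proof -
  have inner: "(\<integral>\<^sup>+x. ennreal (if 0 < x \<and> x < y \<and> y < 1 then C * (y-x) powr r else 0) \<partial>lborel)
     = (if r > -1 then ennreal (indicator {0<..<1} y * (C / (r+1) * (y powr (r+1) * (1-y) powr 0)))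
        else \<infinity> * indicator {0<..<1} y)" for y
  proof (cases "0 < y \<and> y < 1")
    case True
    have "(\<integral>\<^sup>+x. ennreal (if 0 < x \<and> x < y \<and> y < 1 then C * (y-x) powr r else 0) \<partial>lborel)
        = (\<integral>\<^sup>+x. ennreal C * ennreal (indicator {0<..<y} x * ((x-0) powr 0 * (y-x) powr r)) \<partial>lborel)"
      using True C by (intro nn_integral_cong) (auto simp: indicator_def ennreal_mult'[symmetric])
    also have "\<dots> = ennreal C * (\<integral>\<^sup>+x. ennreal (indicator {0<..<y} x * ((x-0) powr 0 * (y-x) powr r)) \<partial>lborel)"
      by (rule nn_integral_cmult) measurable
    also have "\<dots> = ennreal C * (if (0::real) > -1 \<and> r > -1 then ennreal ((y-0) powr (0+r+1) * Beta (0+1) (r+1)) else \<infinity>)"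
      using True by (subst beta_nn) auto
    finally show ?thesis
      using True C by (auto simp: Beta_1_left ennreal_mult'[symmetric] ennreal_mult_top indicator_def add.commute)
  next
    case False
    then have "(\<lambda>x. ennreal (if 0 < x \<and> x < y \<and> y < 1 then C * (y-x) powr r else 0)) = (\<lambda>x. 0)"
      by (auto intro!: ext)
    moreover have "indicator {0<..<1} y = (0::real)" "indicator {0<..<1} y = (0::ennreal)"
      using False by (auto simp: indicator_def)
    ultimately show ?thesis by simp
  qed
  show ?thesis
  proof (cases "r > -1")
    case True
    have "(\<integral>\<^sup>+y. \<integral>\<^sup>+x. ennreal (if 0 < x \<and> x < y \<and> y < 1 then C * (y-x) powr r else 0) \<partial>lborel \<partial>lborel)
       = (\<integral>\<^sup>+y. ennreal (C / (r+1)) * ennreal (indicator {0<..<1} y * ((y-0) powr (r+1) * (1-y) powr 0)) \<partial>lborel)"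
      using True C by (intro nn_integral_cong) (auto simp: inner indicator_def ennreal_mult'[symmetric])
    also have "\<dots> = ennreal (C / (r+1)) * (\<integral>\<^sup>+y. ennreal (indicator {0<..<1} y * ((y-0) powr (r+1) * (1-y) powr 0)) \<partial>lborel)"
      by (rule nn_integral_cmult) measurable
    also have "\<dots> = ennreal (C / (r+1)) * ennreal ((1-0) powr ((r+1)+0+1) * Beta ((r+1)+1) (0+1))"
      using True by (subst beta_nn) auto
    also have "\<dots> = ennreal (C / ((r+1)*(r+2)))"
      using True C by (simp add: Beta_1_right ennreal_mult'[symmetric] add.assoc)
    finally show ?thesis using True by simp
  next
    case False
    have "(\<integral>\<^sup>+y. \<integral>\<^sup>+x. ennreal (if 0 < x \<and> x < y \<and> y < 1 then C * (y-x) powr r else 0) \<partial>lborel \<partial>lborel)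
       = (\<integral>\<^sup>+y. \<infinity> * indicator {0<..<(1::real)} y \<partial>lborel)"
      by (rule nn_integral_cong) (use False in \<open>simp add: inner\<close>)
    also have "\<dots> = \<infinity>" by (simp add: nn_integral_cmult_indicator)
    finally show ?thesis using False by simp
  qed
qed

lemma pim_single:
  fixes H :: "real \<Rightarrow> ennreal" and i :: nat
  assumes "H \<in> borel_measurable lborel"
  shows "(\<integral>\<^sup>+x. H (x i) \<partial>(Pi\<^sub>M {i} (\<lambda>_. lborel))) = (\<integral>\<^sup>+z. H z \<partial>lborel)"
proof -
  interpret product_sigma_finite "\<lambda>_::nat. lborel :: real measure" by standard
  show ?thesis using product_nn_integral_singleton[of H i] assms by simp
qed

lemma pim_insert:
  fixes f :: "(nat \<Rightarrow> real) \<Rightarrow> ennreal"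
  assumes "finite I" "i \<notin> I" "f \<in> borel_measurable (Pi\<^sub>M (insert i I) (\<lambda>_. lborel))"
  shows "(\<integral>\<^sup>+x. f x \<partial>(Pi\<^sub>M (insert i I) (\<lambda>_. lborel)))
       = (\<integral>\<^sup>+x. \<integral>\<^sup>+y. f (x(i:=y)) \<partial>lborel \<partial>(Pi\<^sub>M I (\<lambda>_. lborel)))"
proof -
  interpret product_sigma_finite "\<lambda>_::nat. lborel :: real measure" by standard
  show ?thesis using assms by (rule product_nn_integral_insert)
qed

lemma stage:
  fixes a b p q K :: real
  assumes "p > -1" "q > -1" "K \<ge> 0"
  shows "(\<integral>\<^sup>+y. ennreal (if P \<and> a < y \<and> y < b then K * ((y-a) powr p * (b-y) powr q) else 0) \<partial>lborel)
       = ennreal (if P \<and> a < b then K * ((b-a) powr (p+q+1) * Beta (p+1) (q+1)) else 0)"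
proof (cases "P \<and> a < b")
  case True
  have "(\<integral>\<^sup>+y. ennreal (if P \<and> a < y \<and> y < b then K * ((y-a) powr p * (b-y) powr q) else 0) \<partial>lborel)
      = (\<integral>\<^sup>+y. ennreal K * ennreal (indicator {a<..<b} y * ((y-a) powr p * (b-y) powr q)) \<partial>lborel)"
    using True assms by (intro nn_integral_cong) (auto simp: indicator_def ennreal_mult'[symmetric])
  also have "\<dots> = ennreal K * (\<integral>\<^sup>+y. ennreal (indicator {a<..<b} y * ((y-a) powr p * (b-y) powr q)) \<partial>lborel)"
    by (rule nn_integral_cmult) measurable
  also have "\<dots> = ennreal (K * ((b-a) powr (p+q+1) * Beta (p+1) (q+1)))"
    using True assms by (simp add: beta_nn ennreal_mult'[symmetric])
  finally show ?thesis using True by simp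
next
  case False
  then have "(\<lambda>y. ennreal (if P \<and> a < y \<and> y < b then K * ((y-a) powr p * (b-y) powr q) else 0)) = (\<lambda>y. 0)"
    by (auto intro!: ext)
  then show ?thesis using False by auto
qed

lemma pim_insert_cong:
  fixes f :: "(nat \<Rightarrow> real) \<Rightarrow> ennreal" and I :: "nat set"
  assumes "finite I" "i \<notin> I" "f \<in> borel_measurable (Pi\<^sub>M (insert i I) (\<lambda>_. lborel))"
    and "\<And>x y. f (x(i:=y)) = g x y"
  shows "(\<integral>\<^sup>+x. f x \<partial>(Pi\<^sub>M (insert i I) (\<lambda>_. lborel)))
       = (\<integral>\<^sup>+x. \<integral>\<^sup>+y. g x y \<partial>lborel \<partial>(Pi\<^sub>M I (\<lambda>_. lborel)))"
  using pim_insert[OF assms(1-3)] assms(4) by simp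

lemma Beta_pos: "(x::real) > 0 \<Longrightarrow> y > 0 \<Longrightarrow> Beta x y > 0"
  unfolding Beta_def by simp

lemma it2:
  fixes p :: real
  shows "(\<integral>\<^sup>+x. ennreal (if 0 < x 0 \<and> x 0 < x 1 \<and> x 1 < 1 then (x 1 - x 0) powr p else 0) \<partial>cube_measure 2)
       = (if p > -1 then ennreal (1 / ((p+1)*(p+2))) else \<infinity>)"
proof -
  have set: "{..<2::nat} = insert 0 {1}" by auto
  have "(\<integral>\<^sup>+x. ennreal (if 0 < x 0 \<and> x 0 < x 1 \<and> x 1 < 1 then (x 1 - x 0) powr p else 0) \<partial>cube_measure 2)
      = (\<integral>\<^sup>+x. \<integral>\<^sup>+y. ennreal (if 0 < y \<and> y < x 1 \<and> x 1 < 1 then 1 * (x 1 - y) powr p else 0) \<partial>lborel \<partial>(Pi\<^sub>M {1::nat} (\<lambda>_. lborel)))"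
    unfolding cube_measure_def set by (rule pim_insert_cong; ((auto simp: fun_upd_apply; fail) | measurable))
  also have "\<dots> = (\<integral>\<^sup>+z. \<integral>\<^sup>+y. ennreal (if 0 < y \<and> y < z \<and> z < 1 then 1 * (z - y) powr p else 0) \<partial>lborel \<partial>lborel)"
    by (rule pim_single[of "\<lambda>z. \<integral>\<^sup>+y. ennreal (if 0 < y \<and> y < z \<and> z < 1 then 1 * (z - y) powr p else 0) \<partial>lborel"]) measurable
  also have "\<dots> = (if p > -1 then ennreal (1 / ((p+1)*(p+2))) else \<infinity>)"
    by (rule out2) simp
  finally show ?thesis .
qed

lemma it3:
  fixes p1 p2 p3 :: real
  assumes p1: "p1 > -1" and p2: "p2 > -1"
  shows "(\<integral>\<^sup>+x. ennreal (if 0 < x 0 \<and> x 0 < x 1 \<and> x 1 < x 2 \<and> x 2 < 1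
            then (x 1 - x 0) powr p1 * (x 2 - x 1) powr p2 * (x 2 - x 0) powr p3 else 0) \<partial>cube_measure 3)
       = (if p1+p2+p3+1 > -1 then ennreal (Beta (p1+1) (p2+1) / ((p1+p2+p3+2)*(p1+p2+p3+3))) else \<infinity>)"
proof -
  define B where "B = Beta (p1+1) (p2+1)"
  define r where "r = p1+p2+p3+1"
  have B: "B > 0" unfolding B_def using p1 p2 by (intro Beta_pos) auto
  have set: "{..<3::nat} = insert 1 (insert 0 {2})" by auto
  have "(\<integral>\<^sup>+x. ennreal (if 0 < x 0 \<and> x 0 < x 1 \<and> x 1 < x 2 \<and> x 2 < 1
            then (x 1 - x 0) powr p1 * (x 2 - x 1) powr p2 * (x 2 - x 0) powr p3 else 0) \<partial>cube_measure 3)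
      = (\<integral>\<^sup>+x. \<integral>\<^sup>+y. ennreal (if 0 < x 0 \<and> x 0 < y \<and> y < x 2 \<and> x 2 < 1
            then (y - x 0) powr p1 * (x 2 - y) powr p2 * (x 2 - x 0) powr p3 else 0) \<partial>lborel \<partial>(Pi\<^sub>M {0,2::nat} (\<lambda>_. lborel)))"
    unfolding cube_measure_def set by (rule pim_insert_cong; ((auto simp: fun_upd_apply; fail) | measurable))
  also have "\<dots> = (\<integral>\<^sup>+x. ennreal (if 0 < x 0 \<and> x 0 < x 2 \<and> x 2 < 1 then B * (x 2 - x 0) powr r else 0) \<partial>(Pi\<^sub>M {0,2::nat} (\<lambda>_. lborel)))"
  proof (intro nn_integral_cong)
    fix x :: "nat \<Rightarrow> real"
    have "(\<integral>\<^sup>+y. ennreal (if 0 < x 0 \<and> x 0 < y \<and> y < x 2 \<and> x 2 < 1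
            then (y - x 0) powr p1 * (x 2 - y) powr p2 * (x 2 - x 0) powr p3 else 0) \<partial>lborel)
        = (\<integral>\<^sup>+y. ennreal (if (0 < x 0 \<and> x 2 < 1) \<and> x 0 < y \<and> y < x 2
            then (x 2 - x 0) powr p3 * ((y - x 0) powr p1 * (x 2 - y) powr p2) else 0) \<partial>lborel)"
      by (intro nn_integral_cong) (auto simp: ac_simps)
    also have "\<dots> = ennreal (if (0 < x 0 \<and> x 2 < 1) \<and> x 0 < x 2 then (x 2 - x 0) powr p3 * ((x 2 - x 0) powr (p1+p2+1) * Beta (p1+1) (p2+1)) else 0)"
      using p1 p2 by (intro stage) auto
    also have "\<dots> = ennreal (if 0 < x 0 \<and> x 0 < x 2 \<and> x 2 < 1 then B * (x 2 - x 0) powr r else 0)"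
      unfolding B_def r_def by (auto simp: powr_add[symmetric] ac_simps)
    finally show "(\<integral>\<^sup>+y. ennreal (if 0 < x 0 \<and> x 0 < y \<and> y < x 2 \<and> x 2 < 1
            then (y - x 0) powr p1 * (x 2 - y) powr p2 * (x 2 - x 0) powr p3 else 0) \<partial>lborel)
        = ennreal (if 0 < x 0 \<and> x 0 < x 2 \<and> x 2 < 1 then B * (x 2 - x 0) powr r else 0)" .
  qed
  also have "\<dots> = (\<integral>\<^sup>+x. \<integral>\<^sup>+y. ennreal (if 0 < y \<and> y < x 2 \<and> x 2 < 1 then B * (x 2 - y) powr r else 0) \<partial>lborel \<partial>(Pi\<^sub>M {2::nat} (\<lambda>_. lborel)))"
    by (rule pim_insert_cong; ((auto simp: fun_upd_apply; fail) | measurable))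
  also have "\<dots> = (\<integral>\<^sup>+z. \<integral>\<^sup>+y. ennreal (if 0 < y \<and> y < z \<and> z < 1 then B * (z - y) powr r else 0) \<partial>lborel \<partial>lborel)"
    by (rule pim_single[of "\<lambda>z. \<integral>\<^sup>+y. ennreal (if 0 < y \<and> y < z \<and> z < 1 then B * (z - y) powr r else 0) \<partial>lborel"]) measurable
  also have "\<dots> = (if r > -1 then ennreal (B / ((r+1)*(r+2))) else \<infinity>)"
    by (rule out2) (rule B)
  finally show ?thesis unfolding r_def B_def by (simp add: ac_simps add_ac)
qed

lemma it4:
  fixes p1 p2 p3 p4 p5 :: real
  assumes p1: "p1 > -1" and p2: "p2 > -1" and p3: "p3 > -1" and p4: "p1+p2+p4+1 > -1"
  shows "(\<integral>\<^sup>+x. ennreal (if 0 < x 0 \<and> x 0 < x 1 \<and> x 1 < x 2 \<and> x 2 < x 3 \<and> x 3 < 1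
            then (x 1 - x 0) powr p1 * (x 2 - x 1) powr p2 * (x 3 - x 2) powr p3 * (x 2 - x 0) powr p4 * (x 3 - x 0) powr p5 else 0) \<partial>cube_measure 4)
       = (if p1+p2+p3+p4+p5+2 > -1 then ennreal (Beta (p1+1) (p2+1) * Beta (p1+p2+p4+2) (p3+1) / ((p1+p2+p3+p4+p5+3)*(p1+p2+p3+p4+p5+4))) else \<infinity>)"
proof -
  define B1 where "B1 = Beta (p1+1) (p2+1)"
  define s where "s = p1+p2+p4+1"
  define B2 where "B2 = Beta (s+1) (p3+1)"
  define r where "r = p1+p2+p3+p4+p5+2"
  have B1: "B1 > 0" unfolding B1_def using p1 p2 by (intro Beta_pos) auto
  have B2: "B2 > 0" unfolding B2_def s_def using p3 p4 by (intro Beta_pos) auto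
  have set: "{..<4::nat} = insert 1 (insert 2 (insert 0 {3}))" by auto
  have "(\<integral>\<^sup>+x. ennreal (if 0 < x 0 \<and> x 0 < x 1 \<and> x 1 < x 2 \<and> x 2 < x 3 \<and> x 3 < 1
            then (x 1 - x 0) powr p1 * (x 2 - x 1) powr p2 * (x 3 - x 2) powr p3 * (x 2 - x 0) powr p4 * (x 3 - x 0) powr p5 else 0) \<partial>cube_measure 4)
      = (\<integral>\<^sup>+x. \<integral>\<^sup>+y. ennreal (if 0 < x 0 \<and> x 0 < y \<and> y < x 2 \<and> x 2 < x 3 \<and> x 3 < 1
            then (y - x 0) powr p1 * (x 2 - y) powr p2 * (x 3 - x 2) powr p3 * (x 2 - x 0) powr p4 * (x 3 - x 0) powr p5 else 0) \<partial>lborel \<partial>(Pi\<^sub>M {2,0,3::nat} (\<lambda>_. lborel)))"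
    unfolding cube_measure_def set by (rule pim_insert_cong; ((auto simp: fun_upd_apply; fail) | measurable))
  also have "\<dots> = (\<integral>\<^sup>+x. ennreal (if 0 < x 0 \<and> x 0 < x 2 \<and> x 2 < x 3 \<and> x 3 < 1
            then B1 * (x 3 - x 0) powr p5 * ((x 2 - x 0) powr s * (x 3 - x 2) powr p3) else 0) \<partial>(Pi\<^sub>M {2,0,3::nat} (\<lambda>_. lborel)))"
  proof (intro nn_integral_cong)
    fix x :: "nat \<Rightarrow> real"
    have "(\<integral>\<^sup>+y. ennreal (if 0 < x 0 \<and> x 0 < y \<and> y < x 2 \<and> x 2 < x 3 \<and> x 3 < 1
            then (y - x 0) powr p1 * (x 2 - y) powr p2 * (x 3 - x 2) powr p3 * (x 2 - x 0) powr p4 * (x 3 - x 0) powr p5 else 0) \<partial>lborel)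
        = (\<integral>\<^sup>+y. ennreal (if (0 < x 0 \<and> x 2 < x 3 \<and> x 3 < 1) \<and> x 0 < y \<and> y < x 2
            then ((x 3 - x 2) powr p3 * (x 2 - x 0) powr p4 * (x 3 - x 0) powr p5) * ((y - x 0) powr p1 * (x 2 - y) powr p2) else 0) \<partial>lborel)"
      by (intro nn_integral_cong) (auto simp: ac_simps)
    also have "\<dots> = ennreal (if (0 < x 0 \<and> x 2 < x 3 \<and> x 3 < 1) \<and> x 0 < x 2 then ((x 3 - x 2) powr p3 * (x 2 - x 0) powr p4 * (x 3 - x 0) powr p5) * ((x 2 - x 0) powr (p1+p2+1) * Beta (p1+1) (p2+1)) else 0)"
      using p1 p2 by (intro stage) auto
    also have "\<dots> = ennreal (if 0 < x 0 \<and> x 0 < x 2 \<and> x 2 < x 3 \<and> x 3 < 1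
            then B1 * (x 3 - x 0) powr p5 * ((x 2 - x 0) powr s * (x 3 - x 2) powr p3) else 0)"
    proof -
      have sP: "(x 2 - x 0) powr s = (x 2 - x 0) powr p4 * (x 2 - x 0) powr (p1+p2+1)"
        unfolding s_def by (simp add: powr_add[symmetric] ac_simps)
      show ?thesis unfolding B1_def sP by (auto simp: ac_simps)
    qed
    finally show "(\<integral>\<^sup>+y. ennreal (if 0 < x 0 \<and> x 0 < y \<and> y < x 2 \<and> x 2 < x 3 \<and> x 3 < 1
            then (y - x 0) powr p1 * (x 2 - y) powr p2 * (x 3 - x 2) powr p3 * (x 2 - x 0) powr p4 * (x 3 - x 0) powr p5 else 0) \<partial>lborel)
        = ennreal (if 0 < x 0 \<and> x 0 < x 2 \<and> x 2 < x 3 \<and> x 3 < 1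
            then B1 * (x 3 - x 0) powr p5 * ((x 2 - x 0) powr s * (x 3 - x 2) powr p3) else 0)" .
  qed
  also have "\<dots> = (\<integral>\<^sup>+x. \<integral>\<^sup>+y. ennreal (if 0 < x 0 \<and> x 0 < y \<and> y < x 3 \<and> x 3 < 1
            then B1 * (x 3 - x 0) powr p5 * ((y - x 0) powr s * (x 3 - y) powr p3) else 0) \<partial>lborel \<partial>(Pi\<^sub>M {0,3::nat} (\<lambda>_. lborel)))"
    by (rule pim_insert_cong; ((auto simp: fun_upd_apply; fail) | measurable))
  also have "\<dots> = (\<integral>\<^sup>+x. ennreal (if 0 < x 0 \<and> x 0 < x 3 \<and> x 3 < 1 then (B1 * B2) * (x 3 - x 0) powr r else 0) \<partial>(Pi\<^sub>M {0,3::nat} (\<lambda>_. lborel)))"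
  proof (intro nn_integral_cong)
    fix x :: "nat \<Rightarrow> real"
    have "(\<integral>\<^sup>+y. ennreal (if 0 < x 0 \<and> x 0 < y \<and> y < x 3 \<and> x 3 < 1
            then B1 * (x 3 - x 0) powr p5 * ((y - x 0) powr s * (x 3 - y) powr p3) else 0) \<partial>lborel)
        = (\<integral>\<^sup>+y. ennreal (if (0 < x 0 \<and> x 3 < 1) \<and> x 0 < y \<and> y < x 3
            then (B1 * (x 3 - x 0) powr p5) * ((y - x 0) powr s * (x 3 - y) powr p3) else 0) \<partial>lborel)"
      by (intro nn_integral_cong) (auto simp: ac_simps)
    also have "\<dots> = ennreal (if (0 < x 0 \<and> x 3 < 1) \<and> x 0 < x 3 then (B1 * (x 3 - x 0) powr p5) * ((x 3 - x 0) powr (s+p3+1) * Beta (s+1) (p3+1)) else 0)"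
      using p3 p4 B1 unfolding s_def by (intro stage) auto
    also have "\<dots> = ennreal (if 0 < x 0 \<and> x 0 < x 3 \<and> x 3 < 1 then (B1 * B2) * (x 3 - x 0) powr r else 0)"
    proof -
      have rP: "(x 3 - x 0) powr r = (x 3 - x 0) powr p5 * (x 3 - x 0) powr (s+p3+1)"
        unfolding r_def s_def by (simp add: powr_add[symmetric] ac_simps)
      show ?thesis unfolding B2_def rP by (auto simp: ac_simps)
    qed
    finally show "(\<integral>\<^sup>+y. ennreal (if 0 < x 0 \<and> x 0 < y \<and> y < x 3 \<and> x 3 < 1
            then B1 * (x 3 - x 0) powr p5 * ((y - x 0) powr s * (x 3 - y) powr p3) else 0) \<partial>lborel)
        = ennreal (if 0 < x 0 \<and> x 0 < x 3 \<and> x 3 < 1 then (B1 * B2) * (x 3 - x 0) powr r else 0)" .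
  qed
  also have "\<dots> = (\<integral>\<^sup>+x. \<integral>\<^sup>+y. ennreal (if 0 < y \<and> y < x 3 \<and> x 3 < 1 then (B1 * B2) * (x 3 - y) powr r else 0) \<partial>lborel \<partial>(Pi\<^sub>M {3::nat} (\<lambda>_. lborel)))"
    by (rule pim_insert_cong; ((auto simp: fun_upd_apply; fail) | measurable))
  also have "\<dots> = (\<integral>\<^sup>+z. \<integral>\<^sup>+y. ennreal (if 0 < y \<and> y < z \<and> z < 1 then (B1 * B2) * (z - y) powr r else 0) \<partial>lborel \<partial>lborel)"
    by (rule pim_single[of "\<lambda>z. \<integral>\<^sup>+y. ennreal (if 0 < y \<and> y < z \<and> z < 1 then (B1 * B2) * (z - y) powr r else 0) \<partial>lborel"]) measurable
  also have "\<dots> = (if r > -1 then ennreal ((B1 * B2) / ((r+1)*(r+2))) else \<infinity>)"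
    by (rule out2) (use B1 B2 in simp)
  finally show ?thesis unfolding r_def B1_def B2_def s_def by (simp add: ac_simps add_ac)
qed

lemma interch:
  fixes M :: "'a measure" and g :: "nat \<Rightarrow> real" and \<phi> :: "nat \<Rightarrow> 'a \<Rightarrow> real" and F :: "'a \<Rightarrow> real"
  assumes nn: "\<And>k x. 0 \<le> \<phi> k x"
    and int\<phi>: "\<And>k. integrable M (\<phi> k)"
    and intF: "integrable M F"
    and sm: "\<And>x. x \<in> space M \<Longrightarrow> (\<lambda>k. g k * \<phi> k x) sums F x"
    and \<sigma>: "\<sigma> = 1 \<or> \<sigma> = (-1::real)"
    and K: "\<And>k. k \<ge> K \<Longrightarrow> 0 \<le> \<sigma> * g k"
  shows "(\<lambda>k. g k * integral\<^sup>L M (\<phi> k)) sums integral\<^sup>L M F"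
proof -
  have \<sigma>\<sigma>: "\<sigma> * \<sigma> = 1" using \<sigma> by auto
  have [measurable]: "\<phi> k \<in> borel_measurable M" for k using int\<phi> by auto
  define T where "T = (\<lambda>x. F x - (\<Sum>k<K. g k * \<phi> k x))"
  have intS: "integrable M (\<lambda>x. \<Sum>k<K. g k * \<phi> k x)"
    using int\<phi> by (intro Bochner_Integration.integrable_sum Bochner_Integration.integrable_mult_right) auto
  have intT: "integrable M T"
    unfolding T_def using intF intS by (rule Bochner_Integration.integrable_diff)
  have Ts: "(\<lambda>k. \<sigma> * (g (k+K) * \<phi> (k+K) x)) sums (\<sigma> * T x)" if "x \<in> space M" for x
  proof -
    have sh: "(\<lambda>i. g (i+K) * \<phi> (i+K) x) sums s \<longleftrightarrow> (\<lambda>k. g k * \<phi> k x) sums (s + (\<Sum>i<K. g i * \<phi> i x))" for s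
      using sums_iff_shift[of "\<lambda>k. g k * \<phi> k x" K s] by simp
    have "(\<lambda>k. g (k+K) * \<phi> (k+K) x) sums (F x - (\<Sum>k<K. g k * \<phi> k x))"
      using sm[OF that] unfolding sh by simp
    then show ?thesis unfolding T_def by (rule sums_mult)
  qed
  have nnT: "0 \<le> \<sigma> * (g (k+K) * \<phi> (k+K) x)" for k x
  proof -
    have h: "0 \<le> \<sigma> * g (k+K)" using K[of "k+K"] by simp
    have "0 \<le> (\<sigma> * g (k+K)) * \<phi> (k+K) x" by (rule mult_nonneg_nonneg[OF h nn])
    then show ?thesis by (simp add: mult.assoc)
  qed
  have Tnn: "0 \<le> \<sigma> * T x" if "x \<in> space M" for x
    using sums_le[OF _ sums_zero Ts[OF that]] nnT by auto
  have "ennreal (integral\<^sup>L M (\<lambda>x. \<sigma> * T x)) = (\<integral>\<^sup>+x. ennreal (\<sigma> * T x) \<partial>M)"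
    by (rule nn_integral_eq_integral[symmetric]) (use intT Tnn in auto)
  also have "\<dots> = (\<integral>\<^sup>+x. (\<Sum>k. ennreal (\<sigma> * (g (k+K) * \<phi> (k+K) x))) \<partial>M)"
  proof (intro nn_integral_cong)
    fix x assume x: "x \<in> space M"
    have "(\<lambda>k. ennreal (\<sigma> * (g (k+K) * \<phi> (k+K) x))) sums ennreal (\<sigma> * T x)"
      using Ts[OF x] nnT Tnn[OF x] by (subst sums_ennreal) auto
    then show "ennreal (\<sigma> * T x) = (\<Sum>k. ennreal (\<sigma> * (g (k+K) * \<phi> (k+K) x)))"
      by (simp add: sums_unique)
  qed
  also have "\<dots> = (\<Sum>k. \<integral>\<^sup>+x. ennreal (\<sigma> * (g (k+K) * \<phi> (k+K) x)) \<partial>M)"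
    by (rule nn_integral_suminf) measurable
  also have "\<dots> = (\<Sum>k. ennreal (\<sigma> * (g (k+K) * integral\<^sup>L M (\<phi> (k+K)))))"
  proof (intro arg_cong[where f=suminf] ext)
    fix k
    have "(\<integral>\<^sup>+x. ennreal (\<sigma> * (g (k+K) * \<phi> (k+K) x)) \<partial>M)
        = ennreal (integral\<^sup>L M (\<lambda>x. \<sigma> * (g (k+K) * \<phi> (k+K) x)))"
      using int\<phi> nnT by (intro nn_integral_eq_integral) auto
    then show "(\<integral>\<^sup>+x. ennreal (\<sigma> * (g (k+K) * \<phi> (k+K) x)) \<partial>M) = ennreal (\<sigma> * (g (k+K) * integral\<^sup>L M (\<phi> (k+K))))"
      by simp
  qed
  finally have E: "(\<Sum>k. ennreal (\<sigma> * (g (k+K) * integral\<^sup>L M (\<phi> (k+K))))) = ennreal (integral\<^sup>L M (\<lambda>x. \<sigma> * T x))"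
    by simp
  have nn2: "0 \<le> \<sigma> * (g (k+K) * integral\<^sup>L M (\<phi> (k+K)))" for k
  proof -
    have "0 \<le> integral\<^sup>L M (\<phi> (k+K))" using nn by (intro Bochner_Integration.integral_nonneg) auto
    moreover have h: "0 \<le> \<sigma> * g (k+K)" using K[of "k+K"] by simp
    ultimately have "0 \<le> (\<sigma> * g (k+K)) * integral\<^sup>L M (\<phi> (k+K))" by (metis mult_nonneg_nonneg)
    then show ?thesis by (simp add: mult.assoc)
  qed
  have I0: "0 \<le> integral\<^sup>L M (\<lambda>x. \<sigma> * T x)"
    using Tnn by (intro Bochner_Integration.integral_nonneg) auto
  have "(\<lambda>k. ennreal (\<sigma> * (g (k+K) * integral\<^sup>L M (\<phi> (k+K))))) sums ennreal (integral\<^sup>L M (\<lambda>x. \<sigma> * T x))"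
    using summable_sums[OF summableI, of "\<lambda>k. ennreal (\<sigma> * (g (k+K) * integral\<^sup>L M (\<phi> (k+K))))"] E by simp
  then have "(\<lambda>k. \<sigma> * (g (k+K) * integral\<^sup>L M (\<phi> (k+K)))) sums integral\<^sup>L M (\<lambda>x. \<sigma> * T x)"
    using nn2 I0 by simp
  then have "(\<lambda>k. \<sigma> * (\<sigma> * (g (k+K) * integral\<^sup>L M (\<phi> (k+K))))) sums (\<sigma> * integral\<^sup>L M (\<lambda>x. \<sigma> * T x))"
    by (rule sums_mult)
  then have S: "(\<lambda>k. g (k+K) * integral\<^sup>L M (\<phi> (k+K))) sums integral\<^sup>L M T"
    using \<sigma>\<sigma> by (simp add: mult.assoc[symmetric])
  have "integral\<^sup>L M T = integral\<^sup>L M F - integral\<^sup>L M (\<lambda>x. \<Sum>k<K. g k * \<phi> k x)"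
    unfolding T_def using intF intS by (rule Bochner_Integration.integral_diff)
  also have "integral\<^sup>L M (\<lambda>x. \<Sum>k<K. g k * \<phi> k x) = (\<Sum>k<K. integral\<^sup>L M (\<lambda>x. g k * \<phi> k x))"
    using int\<phi> by (intro Bochner_Integration.integral_sum) auto
  also have "\<dots> = (\<Sum>k<K. g k * integral\<^sup>L M (\<phi> k))" by simp
  finally have "integral\<^sup>L M T = integral\<^sup>L M F - (\<Sum>k<K. g k * integral\<^sup>L M (\<phi> k))" .
  moreover have sh2: "(\<lambda>i. g (i+K) * integral\<^sup>L M (\<phi> (i+K))) sums s \<longleftrightarrow> (\<lambda>k. g k * integral\<^sup>L M (\<phi> k)) sums (s + (\<Sum>i<K. g i * integral\<^sup>L M (\<phi> i)))" for s
    using sums_iff_shift[of "\<lambda>k. g k * integral\<^sup>L M (\<phi> k)" K s] by simp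
  ultimately show ?thesis using S unfolding sh2 by simp
qed

lemma poch_sign:
  fixes c :: real
  shows "\<exists>\<sigma> K. (\<sigma> = 1 \<or> \<sigma> = -1) \<and> (\<forall>k\<ge>K. 0 \<le> \<sigma> * (pochhammer (-c) k / fact k))"
proof -
  obtain K :: nat where K: "real K > c" using reals_Archimedean2 by blast
  define \<sigma> :: real where "\<sigma> = (if pochhammer (-c) K \<ge> 0 then 1 else -1)"
  have "0 \<le> \<sigma> * (pochhammer (-c) k / fact k)" if "k \<ge> K" for k
  proof -
    have "pochhammer (-c) k = pochhammer (-c) K * pochhammer (-c + of_nat K) (k - K)"
      using pochhammer_product'[of "-c" K "k-K"] that by simp
    moreover have "pochhammer (-c + of_nat K) (k-K) > 0" using K by (intro pochhammer_pos) simp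
    ultimately have "0 \<le> \<sigma> * pochhammer (-c) k"
      unfolding \<sigma>_def by (auto simp: zero_le_mult_iff mult_le_0_iff)
    moreover have "\<sigma> * (pochhammer (-c) k / fact k) = (\<sigma> * pochhammer (-c) k) / fact k" by simp
    ultimately show ?thesis by simp
  qed
  moreover have "\<sigma> = 1 \<or> \<sigma> = -1" unfolding \<sigma>_def by auto
  ultimately show ?thesis by blast
qed

lemma Gpoch: "(z::real) > 0 \<Longrightarrow> Gamma (z + real n) = pochhammer z n * Gamma z"
proof -
  assume z: "z > 0"
  have "Gamma z > 0" using z by simp
  then have "Gamma z \<noteq> 0" by simp
  with pochhammer_Gamma[OF notnp[OF z], of n] show ?thesis by (simp add: field_simps)
qed

definition G2 :: "real \<Rightarrow> (nat \<Rightarrow> real) \<Rightarrow> real" where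
  "G2 a x = (if 0 < x 0 \<and> x 0 < x 1 \<and> x 1 < 1 then (x 1 - x 0) powr a else 0)"

definition G3 :: "real \<Rightarrow> real \<Rightarrow> (nat \<Rightarrow> real) \<Rightarrow> real" where
  "G3 a c x = (if 0 < x 0 \<and> x 0 < x 1 \<and> x 1 < x 2 \<and> x 2 < 1
     then (x 1 - x 0) powr a * (x 2 - x 1) powr a * (x 2 - x 0) powr c else 0)"

definition F3 :: "real \<Rightarrow> real \<Rightarrow> real \<Rightarrow> (nat \<Rightarrow> real) \<Rightarrow> real" where
  "F3 p1 p2 p3 x = (if 0 < x 0 \<and> x 0 < x 1 \<and> x 1 < x 2 \<and> x 2 < 1
     then (x 1 - x 0) powr p1 * (x 2 - x 1) powr p2 * (x 2 - x 0) powr p3 else 0)"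

definition G4 :: "real \<Rightarrow> real \<Rightarrow> real \<Rightarrow> (nat \<Rightarrow> real) \<Rightarrow> real" where
  "G4 a c d x = (if 0 < x 0 \<and> x 0 < x 1 \<and> x 1 < x 2 \<and> x 2 < x 3 \<and> x 3 < 1
     then (x 1 - x 0) powr a * (x 2 - x 1) powr a * (x 3 - x 2) powr a * (x 2 - x 0) powr c * (x 3 - x 1) powr c * (x 3 - x 0) powr d else 0)"

definition F4 :: "real \<Rightarrow> real \<Rightarrow> real \<Rightarrow> real \<Rightarrow> real \<Rightarrow> (nat \<Rightarrow> real) \<Rightarrow> real" where
  "F4 p1 p2 p3 p4 p5 x = (if 0 < x 0 \<and> x 0 < x 1 \<and> x 1 < x 2 \<and> x 2 < x 3 \<and> x 3 < 1
     then (x 1 - x 0) powr p1 * (x 2 - x 1) powr p2 * (x 3 - x 2) powr p3 * (x 2 - x 0) powr p4 * (x 3 - x 0) powr p5 else 0)"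

lemma G2_meas[measurable]: "G2 a \<in> borel_measurable (cube_measure 2)"
  unfolding G2_def cube_measure_def by measurable
lemma G3_meas[measurable]: "G3 a c \<in> borel_measurable (cube_measure 3)"
  unfolding G3_def cube_measure_def by measurable
lemma F3_meas[measurable]: "F3 p1 p2 p3 \<in> borel_measurable (cube_measure 3)"
  unfolding F3_def cube_measure_def by measurable
lemma G4_meas[measurable]: "G4 a c d \<in> borel_measurable (cube_measure 4)"
  unfolding G4_def cube_measure_def by measurable
lemma F4_meas[measurable]: "F4 p1 p2 p3 p4 p5 \<in> borel_measurable (cube_measure 4)"
  unfolding F4_def cube_measure_def by measurable

lemma conv:
  assumes int: "simplex_integrable n e"
    and eq: "\<And>x. x \<in> space (cube_measure n) \<Longrightarrow> indicator (ordered_simplex n) x * pair_weight n e x = G x"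
  shows "integrable (cube_measure n) G" "simplex_integral n e = integral\<^sup>L (cube_measure n) G"
proof -
  from int have "integrable (cube_measure n) (\<lambda>x. indicator (ordered_simplex n) x * pair_weight n e x)"
    unfolding simplex_integrable_def set_integrable_def by simp
  moreover have "integrable (cube_measure n) (\<lambda>x. indicator (ordered_simplex n) x * pair_weight n e x) \<longleftrightarrow> integrable (cube_measure n) G"
    by (rule Bochner_Integration.integrable_cong) (simp_all add: eq)
  ultimately show "integrable (cube_measure n) G" by simp
  have "integral\<^sup>L (cube_measure n) (\<lambda>x. indicator (ordered_simplex n) x * pair_weight n e x) = integral\<^sup>L (cube_measure n) G"
    by (rule Bochner_Integration.integral_cong) (simp_all add: eq)
  then show "simplex_integral n e = integral\<^sup>L (cube_measure n) G"
    unfolding simplex_integral_def set_lebesgue_integral_def by simp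
qed

lemma nn_val:
  fixes G :: "(nat \<Rightarrow> real) \<Rightarrow> real"
  assumes "integrable M G" "\<And>x. 0 \<le> G x"
  shows "(\<integral>\<^sup>+x. ennreal (G x) \<partial>M) = ennreal (integral\<^sup>L M G)"
  using assms by (intro nn_integral_eq_integral) auto

lemma all3: "(\<forall>i<(3::nat). P i) = (P 0 \<and> P 1 \<and> P 2)"
  by (auto simp: eval_nat_numeral less_Suc_eq)
lemma all4: "(\<forall>i<(4::nat). P i) = (P 0 \<and> P 1 \<and> P 2 \<and> P 3)"
  by (auto simp: eval_nat_numeral less_Suc_eq)
lemma all2: "(\<forall>i<(2::nat). P i) = (P 0 \<and> P 1)"
  by (auto simp: eval_nat_numeral less_Suc_eq)

lemma pairs2: "{(i,j). i < j \<and> j < (2::nat)} = {(0,1)}"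
proof (rule set_eqI, rule iffI)
  fix p :: "nat \<times> nat" assume "p \<in> {(i,j). i < j \<and> j < 2}"
  then obtain i j where p: "p = (i,j)" "i < j" "j < 2" by auto
  then have "i = 0 \<and> j = 1" by arith
  then show "p \<in> {(0,1)}" using p by auto
qed auto

lemma pairs3: "{(i,j). i < j \<and> j < (3::nat)} = {(0,1),(0,2),(1,2)}"
proof (rule set_eqI, rule iffI)
  fix p :: "nat \<times> nat" assume "p \<in> {(i,j). i < j \<and> j < 3}"
  then obtain i j where p: "p = (i,j)" "i < j" "j < 3" by auto
  then have "(i = 0 \<and> j = 1) \<or> (i = 0 \<and> j = 2) \<or> (i = 1 \<and> j = 2)" by arith
  then show "p \<in> {(0,1),(0,2),(1,2)}" using p by auto
qed auto

lemma pairs4: "{(i,j). i < j \<and> j < (4::nat)} = {(0,1),(0,2),(0,3),(1,2),(1,3),(2,3)}"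
proof (rule set_eqI, rule iffI)
  fix p :: "nat \<times> nat" assume "p \<in> {(i,j). i < j \<and> j < 4}"
  then obtain i j where p: "p = (i,j)" "i < j" "j < 4" by auto
  then have "(i = 0 \<and> j = 1) \<or> (i = 0 \<and> j = 2) \<or> (i = 0 \<and> j = 3) \<or> (i = 1 \<and> j = 2) \<or> (i = 1 \<and> j = 3) \<or> (i = 2 \<and> j = 3)" by arith
  then show "p \<in> {(0,1),(0,2),(0,3),(1,2),(1,3),(2,3)}" using p by auto
qed auto

lemma allpairs2: "(\<forall>i j. i < j \<and> j < (2::nat) \<longrightarrow> Q i j) = Q 0 1"
proof -
  have "(\<forall>i j. i < j \<and> j < (2::nat) \<longrightarrow> Q i j) = (\<forall>p\<in>{(i,j). i < j \<and> j < (2::nat)}. Q (fst p) (snd p))" by auto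
  then show ?thesis unfolding pairs2 by simp
qed

lemma allpairs3: "(\<forall>i j. i < j \<and> j < (3::nat) \<longrightarrow> Q i j) = (Q 0 1 \<and> Q 0 2 \<and> Q 1 2)"
proof -
  have "(\<forall>i j. i < j \<and> j < (3::nat) \<longrightarrow> Q i j) = (\<forall>p\<in>{(i,j). i < j \<and> j < (3::nat)}. Q (fst p) (snd p))" by auto
  then show ?thesis unfolding pairs3 by simp
qed

lemma allpairs4: "(\<forall>i j. i < j \<and> j < (4::nat) \<longrightarrow> Q i j) = (Q 0 1 \<and> Q 0 2 \<and> Q 0 3 \<and> Q 1 2 \<and> Q 1 3 \<and> Q 2 3)"
proof -
  have "(\<forall>i j. i < j \<and> j < (4::nat) \<longrightarrow> Q i j) = (\<forall>p\<in>{(i,j). i < j \<and> j < (4::nat)}. Q (fst p) (snd p))" by auto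
  then show ?thesis unfolding pairs4 by simp
qed

lemma pw2:
  assumes "x \<in> space (cube_measure 2)"
  shows "indicator (ordered_simplex 2) x * pair_weight 2 e x = G2 (e 0 1) x"
proof -
  have mem: "x \<in> ordered_simplex 2 \<longleftrightarrow> (0 < x 0 \<and> x 0 < x 1 \<and> x 1 < 1)"
    using assms unfolding ordered_simplex_def all2 allpairs2 by auto
  have pw: "pair_weight 2 e x = \<bar>x 0 - x 1\<bar> powr e 0 1"
    unfolding pair_weight_def pairs2 by simp
  show ?thesis
    unfolding G2_def pw using mem by (auto simp: indicator_def abs_minus_commute)
qed

lemma pw3:
  assumes "x \<in> space (cube_measure 3)"
  shows "indicator (ordered_simplex 3) x * pair_weight 3 e x = 
    (if 0 < x 0 \<and> x 0 < x 1 \<and> x 1 < x 2 \<and> x 2 < 1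
     then (x 1 - x 0) powr e 0 1 * (x 2 - x 1) powr e 1 2 * (x 2 - x 0) powr e 0 2 else 0)"
proof -
  have mem: "x \<in> ordered_simplex 3 \<longleftrightarrow> (0 < x 0 \<and> x 0 < x 1 \<and> x 1 < x 2 \<and> x 2 < 1)"
    using assms unfolding ordered_simplex_def all3 allpairs3 by auto
  have pw: "pair_weight 3 e x = \<bar>x 0 - x 1\<bar> powr e 0 1 * (\<bar>x 0 - x 2\<bar> powr e 0 2 * \<bar>x 1 - x 2\<bar> powr e 1 2)"
    unfolding pair_weight_def pairs3 by simp
  show ?thesis
  proof (cases "0 < x 0 \<and> x 0 < x 1 \<and> x 1 < x 2 \<and> x 2 < 1")
    case True
    then have "\<bar>x 0 - x 1\<bar> = x 1 - x 0" "\<bar>x 0 - x 2\<bar> = x 2 - x 0" "\<bar>x 1 - x 2\<bar> = x 2 - x 1" by auto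
    then show ?thesis unfolding pw using mem True by (simp add: ac_simps)
  next
    case False
    then show ?thesis using mem by simp
  qed
qed

lemma pw4:
  assumes "x \<in> space (cube_measure 4)"
  shows "indicator (ordered_simplex 4) x * pair_weight 4 e x = 
    (if 0 < x 0 \<and> x 0 < x 1 \<and> x 1 < x 2 \<and> x 2 < x 3 \<and> x 3 < 1
     then (x 1 - x 0) powr e 0 1 * (x 2 - x 1) powr e 1 2 * (x 3 - x 2) powr e 2 3 * (x 2 - x 0) powr e 0 2 * (x 3 - x 1) powr e 1 3 * (x 3 - x 0) powr e 0 3 else 0)"
proof -
  have mem: "x \<in> ordered_simplex 4 \<longleftrightarrow> (0 < x 0 \<and> x 0 < x 1 \<and> x 1 < x 2 \<and> x 2 < x 3 \<and> x 3 < 1)"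
    using assms unfolding ordered_simplex_def all4 allpairs4 by auto
  have pw: "pair_weight 4 e x = \<bar>x 0 - x 1\<bar> powr e 0 1 * (\<bar>x 0 - x 2\<bar> powr e 0 2 * (\<bar>x 0 - x 3\<bar> powr e 0 3 *
       (\<bar>x 1 - x 2\<bar> powr e 1 2 * (\<bar>x 1 - x 3\<bar> powr e 1 3 * \<bar>x 2 - x 3\<bar> powr e 2 3))))"
    unfolding pair_weight_def pairs4 by simp
  show ?thesis
  proof (cases "0 < x 0 \<and> x 0 < x 1 \<and> x 1 < x 2 \<and> x 2 < x 3 \<and> x 3 < 1")
    case True
    then have "\<bar>x 0 - x 1\<bar> = x 1 - x 0" "\<bar>x 0 - x 2\<bar> = x 2 - x 0" "\<bar>x 1 - x 2\<bar> = x 2 - x 1"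
      "\<bar>x 0 - x 3\<bar> = x 3 - x 0" "\<bar>x 1 - x 3\<bar> = x 3 - x 1" "\<bar>x 2 - x 3\<bar> = x 3 - x 2" by auto
    then show ?thesis unfolding pw using mem True by (simp add: ac_simps)
  next
    case False
    then show ?thesis using mem by simp
  qed
qed

lemma gb_poch: "(c gchoose k) * (-x)^k = pochhammer (-c) k / fact k * (x::real)^k"
proof -
  have "(c gchoose k) * (-x)^k = ((-1)^k * pochhammer (-c) k / fact k) * ((-1)^k * x^k)"
    by (simp only: gbinomial_pochhammer power_minus[of x k])
  also have "\<dots> = ((-1)^k * (-1)^k) * (pochhammer (-c) k / fact k * x^k)"
    by (simp only: ac_simps times_divide_eq_left times_divide_eq_right)
  also have "(-1::real)^k * (-1)^k = 1" by (rule minus_one_mult_self)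
  finally show ?thesis by simp
qed

lemma series4:
  fixes x0 x1 x2 x3 a c d :: real
  assumes "0 < x0" "x0 < x1" "x1 < x2" "x2 < x3"
  shows "(\<lambda>k. pochhammer (-c) k / fact k * ((x1-x0) powr (a + real k) * (x2-x1) powr a * (x3-x2) powr a * (x2-x0) powr c * (x3-x0) powr (d + c - real k)))
     sums ((x1-x0) powr a * (x2-x1) powr a * (x3-x2) powr a * (x2-x0) powr c * (x3-x1) powr c * (x3-x0) powr d)"
proof -
  have lt: "\<bar>-(x1-x0)\<bar> < x3-x0" using assms by simp
  have gb0: "(\<lambda>n. (c gchoose n) * (-(x1-x0))^n * (x3-x0) powr (c - real n)) sums (-(x1-x0) + (x3-x0)) powr c"
    by (rule gen_binomial_real'[OF lt])
  have e: "-(x1-x0) + (x3-x0) = x3-x1" by simp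
  define Q where "Q = (x1-x0) powr a * (x2-x1) powr a * (x3-x2) powr a * (x2-x0) powr c * (x3-x0) powr d"
  have s: "(\<lambda>k. ((c gchoose k) * (-(x1-x0))^k * (x3-x0) powr (c - real k)) * Q) sums ((x3-x1) powr c * Q)"
    by (rule sums_mult2[OF gb0[unfolded e]])
  have t: "((c gchoose k) * (-(x1-x0))^k * (x3-x0) powr (c - real k)) * Q
      = pochhammer (-c) k / fact k * ((x1-x0) powr (a + real k) * (x2-x1) powr a * (x3-x2) powr a * (x2-x0) powr c * (x3-x0) powr (d + c - real k))" for k
  proof -
    have p1: "(x1-x0) powr (a + real k) = (x1-x0) powr a * (x1-x0)^k"
      using assms by (simp add: powr_add powr_realpow)
    have dd: "d + c - real k = d + (c - real k)" by simp
    have p2: "(x3-x0) powr (d + c - real k) = (x3-x0) powr d * (x3-x0) powr (c - real k)"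
      unfolding dd by (rule powr_add)
    show ?thesis unfolding gb_poch p1 p2 Q_def by (simp add: ac_simps)
  qed
  have qe: "(x3-x1) powr c * Q = (x1-x0) powr a * (x2-x1) powr a * (x3-x2) powr a * (x2-x0) powr c * (x3-x1) powr c * (x3-x0) powr d"
    unfolding Q_def by (simp add: ac_simps)
  have fe: "(\<lambda>k. ((c gchoose k) * (-(x1-x0))^k * (x3-x0) powr (c - real k)) * Q)
     = (\<lambda>k. pochhammer (-c) k / fact k * ((x1-x0) powr (a + real k) * (x2-x1) powr a * (x3-x2) powr a * (x2-x0) powr c * (x3-x0) powr (d + c - real k)))"
    by (rule ext) (rule t)
  from s show ?thesis unfolding fe qe .
qed

lemma lowb3:
  fixes a c :: real
  assumes a: "a \<le> 0" and c: "c \<le> 0"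
  shows "F3 0 0 (2*a+c) x \<le> G3 a c x"
proof (cases "0 < x 0 \<and> x 0 < x 1 \<and> x 1 < x 2 \<and> x 2 < 1")
  case True
  have 1: "(x 2 - x 0) powr a \<le> (x 1 - x 0) powr a" using True a by (intro powr_mono2') auto
  have 2: "(x 2 - x 0) powr a \<le> (x 2 - x 1) powr a" using True a by (intro powr_mono2') auto
  have M: "(x 2 - x 0) powr a * (x 2 - x 0) powr a * (x 2 - x 0) powr c \<le> (x 1 - x 0) powr a * (x 2 - x 1) powr a * (x 2 - x 0) powr c"
    using 1 2 by (intro mult_right_mono mult_mono) auto
  have ee: "2*a+c = a+(a+c)" by simp
  have P: "(x 2 - x 0) powr (2*a+c) = (x 2 - x 0) powr a * (x 2 - x 0) powr a * (x 2 - x 0) powr c"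
    by (simp only: ee powr_add mult.assoc)
  have F: "F3 0 0 (2*a+c) x = (x 2 - x 0) powr (2*a+c)" using True unfolding F3_def by simp
  have G: "G3 a c x = (x 1 - x 0) powr a * (x 2 - x 1) powr a * (x 2 - x 0) powr c" using True unfolding G3_def by simp
  show ?thesis unfolding F G P by (rule M)
next
  case False
  then show ?thesis by (simp only: F3_def G3_def if_not_P[OF False] if_False order_refl)
qed

lemma lowb4:
  fixes a c d :: real
  assumes a: "a \<le> 0" and c: "c \<le> 0"
  shows "F4 0 0 0 0 (3*a+2*c+d) x \<le> G4 a c d x"
proof (cases "0 < x 0 \<and> x 0 < x 1 \<and> x 1 < x 2 \<and> x 2 < x 3 \<and> x 3 < 1")
  case True
  define D where "D = x 3 - x 0"
  have 1: "D powr a \<le> (x 1 - x 0) powr a" unfolding D_def using True a by (intro powr_mono2') auto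
  have 2: "D powr a \<le> (x 2 - x 1) powr a" unfolding D_def using True a by (intro powr_mono2') auto
  have 3: "D powr a \<le> (x 3 - x 2) powr a" unfolding D_def using True a by (intro powr_mono2') auto
  have 4: "D powr c \<le> (x 2 - x 0) powr c" unfolding D_def using True c by (intro powr_mono2') auto
  have 5: "D powr c \<le> (x 3 - x 1) powr c" unfolding D_def using True c by (intro powr_mono2') auto
  have M: "D powr a * D powr a * D powr a * D powr c * D powr c * D powr d
      \<le> (x 1 - x 0) powr a * (x 2 - x 1) powr a * (x 3 - x 2) powr a * (x 2 - x 0) powr c * (x 3 - x 1) powr c * D powr d"
    using 1 2 3 4 5 by (intro mult_right_mono mult_mono mult_nonneg_nonneg) auto
  have ee: "3*a+2*c+d = a+(a+(a+(c+(c+d))))" by simp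
  have P: "D powr (3*a+2*c+d) = D powr a * D powr a * D powr a * D powr c * D powr c * D powr d"
    by (simp only: ee powr_add mult.assoc)
  have F: "F4 0 0 0 0 (3*a+2*c+d) x = D powr (3*a+2*c+d)" using True unfolding F4_def D_def by simp
  have G: "G4 a c d x = (x 1 - x 0) powr a * (x 2 - x 1) powr a * (x 3 - x 2) powr a * (x 2 - x 0) powr c * (x 3 - x 1) powr c * D powr d"
    using True unfolding G4_def D_def by simp
  show ?thesis unfolding F G P by (rule M)
next
  case False
  then show ?thesis by (simp only: F4_def G4_def if_not_P[OF False] if_False order_refl)
qed

lemma main2:
  assumes int: "simplex_integrable 2 e"
  shows "e 0 1 > -1 \<and> simplex_integral 2 e = 1/((e 0 1 + 1)*(e 0 1 + 2))"
proof -
  define a where "a = e 0 1"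
  have c: "integrable (cube_measure 2) (G2 a)" "simplex_integral 2 e = integral\<^sup>L (cube_measure 2) (G2 a)"
    using conv[OF int pw2] unfolding a_def by auto
  have nn: "(\<integral>\<^sup>+x. ennreal (G2 a x) \<partial>cube_measure 2) = ennreal (integral\<^sup>L (cube_measure 2) (G2 a))"
    by (rule nn_val[OF c(1)]) (simp add: G2_def)
  have it: "(\<integral>\<^sup>+x. ennreal (G2 a x) \<partial>cube_measure 2) = (if a > -1 then ennreal (1/((a+1)*(a+2))) else \<infinity>)"
    unfolding G2_def by (rule it2)
  have a: "a > -1"
  proof (rule ccontr)
    assume "\<not> a > -1"
    then show False using nn it by simp
  qed
  have I0: "0 \<le> integral\<^sup>L (cube_measure 2) (G2 a)"
    by (intro Bochner_Integration.integral_nonneg) (simp add: G2_def)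
  have "ennreal (integral\<^sup>L (cube_measure 2) (G2 a)) = ennreal (1/((a+1)*(a+2)))" using nn it a by simp
  then have "integral\<^sup>L (cube_measure 2) (G2 a) = 1/((a+1)*(a+2))"
    using I0 a by (subst (asm) ennreal_inj) auto
  then show ?thesis using a c unfolding a_def by simp
qed

lemma main3:
  fixes a c :: real
  assumes int: "simplex_integrable 3 e" and e: "e 0 1 = a" "e 1 2 = a" "e 0 2 = c"
    and low: "2*a + c \<le> -2 \<Longrightarrow> a \<le> 0 \<and> c \<le> 0"
    and hi: "2*a + c > -2 \<Longrightarrow> a > -1"
  shows "2*a+c > -2 \<and> simplex_integral 3 e = Beta (a+1) (a+1) / ((a+a+c+2)*(a+a+c+3))"
proof -
  have eq: "indicator (ordered_simplex 3) x * pair_weight 3 e x = G3 a c x" if "x \<in> space (cube_measure 3)" for x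
    using pw3[of x e, OF that] e unfolding G3_def by simp
  have c: "integrable (cube_measure 3) (G3 a c)" "simplex_integral 3 e = integral\<^sup>L (cube_measure 3) (G3 a c)"
    using conv[OF int eq] by auto
  have nn: "(\<integral>\<^sup>+x. ennreal (G3 a c x) \<partial>cube_measure 3) = ennreal (integral\<^sup>L (cube_measure 3) (G3 a c))"
    by (rule nn_val[OF c(1)]) (simp add: G3_def)
  have R: "2*a+c > -2"
  proof (rule ccontr)
    assume H: "\<not> 2*a+c > -2"
    then have ac: "a \<le> 0" "c \<le> 0" using low by auto
    have H': "\<not> (0 + 0 + (2*a+c) + 1 > (-1::real))" using H by linarith
    have "(\<integral>\<^sup>+x. ennreal (F3 0 0 (2*a+c) x) \<partial>cube_measure 3) = (if 0 + 0 + (2*a+c) + 1 > (-1::real) then ennreal (Beta (0+1) (0+1) / ((0+0+(2*a+c)+2)*(0+0+(2*a+c)+3))) else \<infinity>)"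
      unfolding F3_def by (rule it3) simp_all
    then have "(\<integral>\<^sup>+x. ennreal (F3 0 0 (2*a+c) x) \<partial>cube_measure 3) = \<infinity>"
      using H' by simp
    moreover have "(\<integral>\<^sup>+x. ennreal (F3 0 0 (2*a+c) x) \<partial>cube_measure 3) \<le> (\<integral>\<^sup>+x. ennreal (G3 a c x) \<partial>cube_measure 3)"
      by (intro nn_integral_mono ennreal_leI lowb3 ac)
    ultimately show False using nn by (simp add: top_unique)
  qed
  with hi have a: "a > -1" by auto
  have it: "(\<integral>\<^sup>+x. ennreal (G3 a c x) \<partial>cube_measure 3)
      = (if a+a+c+1 > -1 then ennreal (Beta (a+1) (a+1) / ((a+a+c+2)*(a+a+c+3))) else \<infinity>)"
    unfolding G3_def by (rule it3[OF a a])
  have R': "a+a+c+1 > -1" using R by linarith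
  have I0: "0 \<le> integral\<^sup>L (cube_measure 3) (G3 a c)"
    by (intro Bochner_Integration.integral_nonneg) (simp add: G3_def)
  have V0: "0 \<le> Beta (a+1) (a+1) / ((a+a+c+2)*(a+a+c+3))"
    using a R' Beta_pos[of "a+1" "a+1"] by (intro divide_nonneg_pos mult_pos_pos) auto
  have "ennreal (integral\<^sup>L (cube_measure 3) (G3 a c)) = ennreal (Beta (a+1) (a+1) / ((a+a+c+2)*(a+a+c+3)))"
    using nn it R' by simp
  then have "integral\<^sup>L (cube_measure 3) (G3 a c) = Beta (a+1) (a+1) / ((a+a+c+2)*(a+a+c+3))"
    using I0 V0 by (subst (asm) ennreal_inj) auto
  then show ?thesis using R c by simp
qed

lemma main4:
  fixes a c d :: real
  assumes int: "simplex_integrable 4 e"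
    and e: "e 0 1 = a" "e 1 2 = a" "e 2 3 = a" "e 0 2 = c" "e 1 3 = c" "e 0 3 = d"
    and low: "3*a+2*c+d \<le> -3 \<Longrightarrow> a \<le> 0 \<and> c \<le> 0"
    and hi: "3*a+2*c+d > -3 \<Longrightarrow> a > -1 \<and> 2*a+c > -2"
  shows "3*a+2*c+d > -3 \<and> (\<lambda>k. pochhammer (-c) k / fact k * (Beta (a + real k + 1) (a + 1) * Beta (a + real k + a + c + 2) (a + 1)
             / ((3*a+2*c+d+3)*(3*a+2*c+d+4)))) sums simplex_integral 4 e"
proof -
  have eq: "indicator (ordered_simplex 4) x * pair_weight 4 e x = G4 a c d x" if "x \<in> space (cube_measure 4)" for x
    using pw4[of x e, OF that] e unfolding G4_def by simp
  have c: "integrable (cube_measure 4) (G4 a c d)" "simplex_integral 4 e = integral\<^sup>L (cube_measure 4) (G4 a c d)"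
    using conv[OF int eq] by auto
  have nn: "(\<integral>\<^sup>+x. ennreal (G4 a c d x) \<partial>cube_measure 4) = ennreal (integral\<^sup>L (cube_measure 4) (G4 a c d))"
    by (rule nn_val[OF c(1)]) (simp add: G4_def)
  have R: "3*a+2*c+d > -3"
  proof (rule ccontr)
    assume H: "\<not> 3*a+2*c+d > -3"
    then have ac: "a \<le> 0" "c \<le> 0" using low by auto
    have H': "\<not> (0 + 0 + 0 + 0 + (3*a+2*c+d) + 2 > (-1::real))" using H by linarith
    have "(\<integral>\<^sup>+x. ennreal (F4 0 0 0 0 (3*a+2*c+d) x) \<partial>cube_measure 4) = (if 0 + 0 + 0 + 0 + (3*a+2*c+d) + 2 > (-1::real) then ennreal (Beta (0+1) (0+1) * Beta (0+0+0+2) (0+1) / ((0+0+0+0+(3*a+2*c+d)+3)*(0+0+0+0+(3*a+2*c+d)+4))) else \<infinity>)"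
      unfolding F4_def by (rule it4) simp_all
    then have "(\<integral>\<^sup>+x. ennreal (F4 0 0 0 0 (3*a+2*c+d) x) \<partial>cube_measure 4) = \<infinity>"
      using H' by simp
    moreover have "(\<integral>\<^sup>+x. ennreal (F4 0 0 0 0 (3*a+2*c+d) x) \<partial>cube_measure 4) \<le> (\<integral>\<^sup>+x. ennreal (G4 a c d x) \<partial>cube_measure 4)"
      by (intro nn_integral_mono ennreal_leI lowb4 ac)
    ultimately show False using nn by (simp add: top_unique)
  qed
  with hi have a: "a > -1" and ac: "2*a+c > -2" by auto
  define V where "V k = Beta (a + real k + 1) (a + 1) * Beta (a + real k + a + c + 2) (a + 1) / ((3*a+2*c+d+3)*(3*a+2*c+d+4))" for k :: nat
  define \<phi> where "\<phi> k = F4 (a + real k) a a c (d + c - real k)" for k :: nat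
  have V0: "V k \<ge> 0" for k
  proof -
    have "Beta (a + real k + 1) (a + 1) > 0" using a by (intro Beta_pos) auto
    moreover have "Beta (a + real k + a + c + 2) (a + 1) > 0" using a ac by (intro Beta_pos) auto
    moreover have "(3*a+2*c+d+3)*(3*a+2*c+d+4) > 0" using R by (intro mult_pos_pos) auto
    ultimately show ?thesis unfolding V_def by simp
  qed
  have itk: "(\<integral>\<^sup>+x. ennreal (\<phi> k x) \<partial>cube_measure 4) = ennreal (V k)" for k
  proof -
    have c1: "a + real k > -1" "a + real k + a + c + 1 > -1" "a + real k + a + a + c + (d + c - real k) + 2 > -1"
      using a ac R by auto
    have e3: "a + real k + a + a + c + (d + c - real k) + 3 = 3*a+2*c+d+3"
             "a + real k + a + a + c + (d + c - real k) + 4 = 3*a+2*c+d+4" by simp_all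
    have "(\<integral>\<^sup>+x. ennreal (\<phi> k x) \<partial>cube_measure 4)
       = (if a + real k + a + a + c + (d + c - real k) + 2 > -1 then ennreal (Beta (a + real k + 1) (a + 1) * Beta (a + real k + a + c + 2) (a + 1)
             / ((a + real k + a + a + c + (d + c - real k) + 3)*(a + real k + a + a + c + (d + c - real k) + 4))) else \<infinity>)"
      unfolding \<phi>_def F4_def by (rule it4) (use c1 a ac in auto)
    then show ?thesis using c1(3) unfolding e3 V_def by simp
  qed
  have \<phi>nn: "0 \<le> \<phi> k x" for k x unfolding \<phi>_def F4_def by simp
  have int\<phi>: "integrable (cube_measure 4) (\<phi> k)" for k
  proof (rule integrableI_nonneg)
    show "\<phi> k \<in> borel_measurable (cube_measure 4)" unfolding \<phi>_def by measurable
    show "AE x in cube_measure 4. 0 \<le> \<phi> k x" using \<phi>nn by simp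
    show "(\<integral>\<^sup>+x. ennreal (\<phi> k x) \<partial>cube_measure 4) < \<infinity>" using itk[of k] by simp
  qed
  have val\<phi>: "integral\<^sup>L (cube_measure 4) (\<phi> k) = V k" for k
  proof -
    have "integral\<^sup>L (cube_measure 4) (\<phi> k) = enn2real (\<integral>\<^sup>+x. ennreal (\<phi> k x) \<partial>cube_measure 4)"
      by (rule integral_eq_nn_integral) (use int\<phi>[of k] \<phi>nn in auto)
    then show ?thesis using itk[of k] V0[of k] by simp
  qed
  have sm: "(\<lambda>k. pochhammer (-c) k / fact k * \<phi> k x) sums G4 a c d x" if "x \<in> space (cube_measure 4)" for x
  proof (cases "0 < x 0 \<and> x 0 < x 1 \<and> x 1 < x 2 \<and> x 2 < x 3 \<and> x 3 < 1")
    case True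
    then show ?thesis unfolding \<phi>_def F4_def G4_def using series4[of "x 0" "x 1" "x 2" "x 3" c a d] True by simp
  next
    case False
    have z1: "\<phi> k x = 0" for k unfolding \<phi>_def F4_def by (simp only: if_not_P[OF False] if_False)
    have z2: "G4 a c d x = 0" unfolding G4_def by (simp only: if_not_P[OF False] if_False)
    show ?thesis unfolding z1 z2 by simp
  qed
  obtain \<sigma> K where \<sigma>: "\<sigma> = 1 \<or> \<sigma> = -1" and K: "\<And>k. k \<ge> K \<Longrightarrow> 0 \<le> \<sigma> * (pochhammer (-c) k / fact k)"
    using poch_sign[of c] by blast
  have "(\<lambda>k. pochhammer (-c) k / fact k * integral\<^sup>L (cube_measure 4) (\<phi> k)) sums integral\<^sup>L (cube_measure 4) (G4 a c d)"
    by (rule interch[OF \<phi>nn int\<phi> c(1) sm \<sigma> K])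
  then show ?thesis using R c(2) unfolding val\<phi> V_def by simp
qed

lemma final4:
  fixes a c D L \<alpha>1 \<alpha>2 \<alpha>3 \<beta>1 \<beta>2 :: real
  assumes a: "a > -1" and ac: "2*a+c > -2" and D: "D > 0"
    and S: "(\<lambda>k. pochhammer (-c) k / fact k * (Beta (a + real k + 1) (a + 1) * Beta (a + real k + a + c + 2) (a + 1) / D)) sums L"
    and h: "\<alpha>1 = -c" "\<alpha>2 = a+1" "\<alpha>3 = 2*a+c+2" "\<beta>1 = 2*a+2" "\<beta>2 = 3*a+c+3"
  shows "L = 1/D * (Gamma \<alpha>2 ^ 2 / Gamma \<beta>1) * (Gamma \<alpha>2 * Gamma \<alpha>3 / Gamma \<beta>2) * hyp3F2 \<alpha>1 \<alpha>2 \<alpha>3 \<beta>1 \<beta>2 1"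
proof -
  have pa2: "\<alpha>2 > 0" "\<alpha>3 > 0" "\<beta>1 > 0" "\<beta>2 > 0" using a ac h by auto
  define C where "C = 1/D * (Gamma \<alpha>2 ^ 2 / Gamma \<beta>1) * (Gamma \<alpha>2 * Gamma \<alpha>3 / Gamma \<beta>2)"
  have gp: "Gamma \<alpha>2 > 0" "Gamma \<alpha>3 > 0" "Gamma \<beta>1 > 0" "Gamma \<beta>2 > 0" using pa2 by auto
  have C0: "C > 0" unfolding C_def using gp D by (intro mult_pos_pos divide_pos_pos zero_less_power) auto
  define t where "t = (\<lambda>k. pochhammer \<alpha>1 k * pochhammer \<alpha>2 k * pochhammer \<alpha>3 k / (pochhammer \<beta>1 k * pochhammer \<beta>2 k) * 1 ^ k / fact k)"
  have trm: "pochhammer (-c) k / fact k * (Beta (a + real k + 1) (a + 1) * Beta (a + real k + a + c + 2) (a + 1) / D) = C * t k" for k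
  proof -
    have g1: "Gamma (a + real k + 1) = Gamma (\<alpha>2 + real k)"
      by (rule arg_cong[where f=Gamma]) (use h in linarith)
    have g2: "Gamma (a + 1) = Gamma \<alpha>2"
      by (rule arg_cong[where f=Gamma]) (use h in linarith)
    have g3: "Gamma (a + real k + 1 + (a + 1)) = Gamma (\<beta>1 + real k)"
      by (rule arg_cong[where f=Gamma]) (use h in linarith)
    have g4: "Gamma (a + real k + a + c + 2) = Gamma (\<alpha>3 + real k)"
      by (rule arg_cong[where f=Gamma]) (use h in linarith)
    have g5: "Gamma (a + real k + a + c + 2 + (a + 1)) = Gamma (\<beta>2 + real k)"
      by (rule arg_cong[where f=Gamma]) (use h in linarith)
    have b1: "Beta (a + real k + 1) (a + 1) = pochhammer \<alpha>2 k * Gamma \<alpha>2 * Gamma \<alpha>2 / (pochhammer \<beta>1 k * Gamma \<beta>1)"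
      by (simp only: Beta_def g1 g2 g3 Gpoch[OF pa2(1)] Gpoch[OF pa2(3)])
    have b2: "Beta (a + real k + a + c + 2) (a + 1) = pochhammer \<alpha>3 k * Gamma \<alpha>3 * Gamma \<alpha>2 / (pochhammer \<beta>2 k * Gamma \<beta>2)"
      by (simp only: Beta_def g4 g2 g5 Gpoch[OF pa2(2)] Gpoch[OF pa2(4)])
    have q: "pochhammer \<beta>1 k > 0" "pochhammer \<beta>2 k > 0" using pa2 by (auto intro: pochhammer_pos)
    have g: "Gamma \<beta>1 > 0" "Gamma \<beta>2 > 0" using pa2 by auto
    have nz: "pochhammer \<beta>1 k \<noteq> 0" "pochhammer \<beta>2 k \<noteq> 0" "Gamma \<beta>1 \<noteq> 0" "Gamma \<beta>2 \<noteq> 0" "D \<noteq> 0" "fact k \<noteq> (0::real)"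
      using q g D by auto
    show ?thesis unfolding b1 b2 C_def t_def h(1)[symmetric] using nz
      by (simp add: field_simps power2_eq_square)
  qed
  have ee: "(\<lambda>k. pochhammer (-c) k / fact k * (Beta (a + real k + 1) (a + 1) * Beta (a + real k + a + c + 2) (a + 1) / D)) = (\<lambda>k. C * t k)"
    by (rule ext) (rule trm)
  have "(\<lambda>k. C * t k) sums L" using S unfolding ee .
  then have "(\<lambda>k. C * t k / C) sums (L / C)" by (rule sums_divide)
  moreover have C1: "C \<noteq> 0" using C0 by simp
  ultimately have "t sums (L / C)" by simp
  then have "suminf t = L / C" by (rule sums_unique[symmetric])
  moreover have "hyp3F2 \<alpha>1 \<alpha>2 \<alpha>3 \<beta>1 \<beta>2 1 = suminf t" unfolding hyp3F2_def t_def by simp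
  ultimately have "hyp3F2 \<alpha>1 \<alpha>2 \<alpha>3 \<beta>1 \<beta>2 1 = L / C" by simp
  then show ?thesis using C0 unfolding C_def[symmetric] by simp
qed

lemma thmI2: "simplex_integrable 2 (I_exp lam 2) \<longrightarrow> I_int 2 lam = 1 / ((1 + 2*lam) * (2 + 2*lam))"
proof
  assume H: "simplex_integrable 2 (I_exp lam 2)"
  have e: "I_exp lam 2 0 1 = 2*lam" unfolding I_exp_def by (simp add: mult.commute)
  have "simplex_integral 2 (I_exp lam 2) = 1/((2*lam + 1)*(2*lam + 2))"
    using main2[OF H] unfolding e by simp
  then show "I_int 2 lam = 1 / ((1 + 2*lam) * (2 + 2*lam))"
    unfolding I_int_def by (simp add: add.commute)
qed

lemma thmJ2: "simplex_integrable 2 (J_exp lam 2) \<longrightarrow> J_int 2 lam = 1 / ((1 + 2*lam) * (2 + 2*lam))"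
proof
  assume H: "simplex_integrable 2 (J_exp lam 2)"
  have e: "J_exp lam 2 0 1 = 2*lam" unfolding J_exp_def by (simp add: mult.commute)
  have "simplex_integral 2 (J_exp lam 2) = 1/((2*lam + 1)*(2*lam + 2))"
    using main2[OF H] unfolding e by simp
  then show "J_int 2 lam = 1 / ((1 + 2*lam) * (2 + 2*lam))"
    unfolding J_int_def by (simp add: add.commute)
qed

lemma beta_eq3:
  fixes a X Y X' Y' A B :: real
  assumes "X = X'" "Y = Y'" "A = a+1" "B = a+1+(a+1)"
  shows "Beta (a+1) (a+1) / (X*Y) = 1 / (X' * Y') * (Gamma A ^ 2 / Gamma B)"
  unfolding Beta_def using assms by (simp add: power2_eq_square)

lemma thmI3: "simplex_integrable 3 (I_exp lam 3) \<longrightarrow>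
       I_int 3 lam = 1 / ((2 + 8*lam) * (3 + 8*lam)) * (Gamma (1 + 2*lam) ^ 2 / Gamma (2 + 4*lam))"
proof
  assume H: "simplex_integrable 3 (I_exp lam 3)"
  have e: "I_exp lam 3 0 1 = 2*lam" "I_exp lam 3 1 2 = 2*lam" "I_exp lam 3 0 2 = 4*lam"
    unfolding I_exp_def by (simp_all add: mult.commute)
  have l: "2*(2*lam)+4*lam \<le> -2 \<Longrightarrow> 2*lam \<le> 0 \<and> 4*lam \<le> 0" by (intro conjI; linarith)
  have h: "2*(2*lam)+4*lam > -2 \<Longrightarrow> 2*lam > -1" by linarith
  have M: "simplex_integral 3 (I_exp lam 3) = Beta (2*lam+1) (2*lam+1) / ((2*lam+2*lam+4*lam+2)*(2*lam+2*lam+4*lam+3))"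
    by (rule main3[OF H e l h, THEN conjunct2])
  show "I_int 3 lam = 1 / ((2 + 8*lam) * (3 + 8*lam)) * (Gamma (1 + 2*lam) ^ 2 / Gamma (2 + 4*lam))"
    unfolding I_int_def M by (rule beta_eq3) linarith+
qed

lemma thmJ3: "simplex_integrable 3 (J_exp lam 3) \<longrightarrow>
       J_int 3 lam = 1 / ((2 + 10*lam) * (3 + 10*lam)) * (Gamma (1 + 4*lam) ^ 2 / Gamma (2 + 8*lam))"
proof
  assume H: "simplex_integrable 3 (J_exp lam 3)"
  have e: "J_exp lam 3 0 1 = 4*lam" "J_exp lam 3 1 2 = 4*lam" "J_exp lam 3 0 2 = 2*lam"
    unfolding J_exp_def by (simp_all add: mult.commute)
  have l: "2*(4*lam)+2*lam \<le> -2 \<Longrightarrow> 4*lam \<le> 0 \<and> 2*lam \<le> 0" by (intro conjI; linarith)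
  have h: "2*(4*lam)+2*lam > -2 \<Longrightarrow> 4*lam > -1" by linarith
  have M: "simplex_integral 3 (J_exp lam 3) = Beta (4*lam+1) (4*lam+1) / ((4*lam+4*lam+2*lam+2)*(4*lam+4*lam+2*lam+3))"
    by (rule main3[OF H e l h, THEN conjunct2])
  show "J_int 3 lam = 1 / ((2 + 10*lam) * (3 + 10*lam)) * (Gamma (1 + 4*lam) ^ 2 / Gamma (2 + 8*lam))"
    unfolding J_int_def M by (rule beta_eq3) linarith+
qed

lemma thmI4: "simplex_integrable 4 (I_exp lam 4) \<longrightarrow>
       I_int 4 lam = 1 / ((3 + 22*lam) * (4 + 22*lam)) *
         (Gamma (1 + 2*lam) ^ 2 / Gamma (2 + 4*lam)) *
         (Gamma (1 + 2*lam) * Gamma (2 + 8*lam) / Gamma (3 + 10*lam)) *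
         hyp3F2 (-4*lam) (1 + 2*lam) (2 + 8*lam) (2 + 4*lam) (3 + 10*lam) 1"
proof
  assume H: "simplex_integrable 4 (I_exp lam 4)"
  have e: "I_exp lam 4 0 1 = 2*lam" "I_exp lam 4 1 2 = 2*lam" "I_exp lam 4 2 3 = 2*lam"
     "I_exp lam 4 0 2 = 4*lam" "I_exp lam 4 1 3 = 4*lam" "I_exp lam 4 0 3 = 8*lam"
    unfolding I_exp_def by (simp_all add: mult.commute)
  have l: "3*(2*lam)+2*(4*lam)+8*lam \<le> -3 \<Longrightarrow> 2*lam \<le> 0 \<and> 4*lam \<le> 0" by (intro conjI; linarith)
  have h: "3*(2*lam)+2*(4*lam)+8*lam > -3 \<Longrightarrow> 2*lam > -1 \<and> 2*(2*lam)+4*lam > -2" by (intro conjI; linarith)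
  note M = main4[OF H e l h]
  have R: "lam > -3/22" using M[THEN conjunct1] by linarith
  have D: "(3*(2*lam)+2*(4*lam)+8*lam+3)*(3*(2*lam)+2*(4*lam)+8*lam+4) = (3 + 22*lam) * (4 + 22*lam)"
    by (simp add: algebra_simps)
  have S: "(\<lambda>k. pochhammer (-(4*lam)) k / fact k * (Beta (2*lam + real k + 1) (2*lam + 1) * Beta (2*lam + real k + 2*lam + 4*lam + 2) (2*lam + 1)
             / ((3 + 22*lam) * (4 + 22*lam)))) sums I_int 4 lam"
    using M[THEN conjunct2] unfolding D I_int_def .
  have Dpos: "(3 + 22*lam) * (4 + 22*lam) > 0"
  proof (rule mult_pos_pos)
    show "0 < 3 + 22*lam" using R by linarith
    show "0 < 4 + 22*lam" using R by linarith
  qed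
  show "I_int 4 lam = 1 / ((3 + 22*lam) * (4 + 22*lam)) *
         (Gamma (1 + 2*lam) ^ 2 / Gamma (2 + 4*lam)) *
         (Gamma (1 + 2*lam) * Gamma (2 + 8*lam) / Gamma (3 + 10*lam)) *
         hyp3F2 (-4*lam) (1 + 2*lam) (2 + 8*lam) (2 + 4*lam) (3 + 10*lam) 1"
    by (rule final4[OF _ _ Dpos S]) (use R in linarith)+
qed

lemma thmJ4: "simplex_integrable 4 (J_exp lam 4) \<longrightarrow>
       J_int 4 lam = 1 / ((3 + 34*lam) * (4 + 34*lam)) *
         (Gamma (1 + 8*lam) ^ 2 / Gamma (2 + 16*lam)) *
         (Gamma (1 + 8*lam) * Gamma (2 + 20*lam) / Gamma (3 + 28*lam)) *
         hyp3F2 (-4*lam) (1 + 8*lam) (2 + 20*lam) (2 + 16*lam) (3 + 28*lam) 1"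
proof
  assume H: "simplex_integrable 4 (J_exp lam 4)"
  have e: "J_exp lam 4 0 1 = 8*lam" "J_exp lam 4 1 2 = 8*lam" "J_exp lam 4 2 3 = 8*lam"
     "J_exp lam 4 0 2 = 4*lam" "J_exp lam 4 1 3 = 4*lam" "J_exp lam 4 0 3 = 2*lam"
    unfolding J_exp_def by (simp_all add: mult.commute)
  have l: "3*(8*lam)+2*(4*lam)+2*lam \<le> -3 \<Longrightarrow> 8*lam \<le> 0 \<and> 4*lam \<le> 0" by (intro conjI; linarith)
  have h: "3*(8*lam)+2*(4*lam)+2*lam > -3 \<Longrightarrow> 8*lam > -1 \<and> 2*(8*lam)+4*lam > -2" by (intro conjI; linarith)
  note M = main4[OF H e l h]
  have R: "lam > -3/34" using M[THEN conjunct1] by linarith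
  have D: "(3*(8*lam)+2*(4*lam)+2*lam+3)*(3*(8*lam)+2*(4*lam)+2*lam+4) = (3 + 34*lam) * (4 + 34*lam)"
    by (simp add: algebra_simps)
  have S: "(\<lambda>k. pochhammer (-(4*lam)) k / fact k * (Beta (8*lam + real k + 1) (8*lam + 1) * Beta (8*lam + real k + 8*lam + 4*lam + 2) (8*lam + 1)
             / ((3 + 34*lam) * (4 + 34*lam)))) sums J_int 4 lam"
    using M[THEN conjunct2] unfolding D J_int_def .
  have Dpos: "(3 + 34*lam) * (4 + 34*lam) > 0"
  proof (rule mult_pos_pos)
    show "0 < 3 + 34*lam" using R by linarith
    show "0 < 4 + 34*lam" using R by linarith
  qed
  show "J_int 4 lam = 1 / ((3 + 34*lam) * (4 + 34*lam)) *
         (Gamma (1 + 8*lam) ^ 2 / Gamma (2 + 16*lam)) *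
         (Gamma (1 + 8*lam) * Gamma (2 + 20*lam) / Gamma (3 + 28*lam)) *
         hyp3F2 (-4*lam) (1 + 8*lam) (2 + 20*lam) (2 + 16*lam) (3 + 28*lam) 1"
    by (rule final4[OF _ _ Dpos S]) (use R in linarith)+
qed

theorem proposition1:
  fixes lam :: real
  shows
   "(simplex_integrable 2 (I_exp lam 2) \<longrightarrow>
       I_int 2 lam = 1 / ((1 + 2*lam) * (2 + 2*lam))) \<and>
    (simplex_integrable 2 (J_exp lam 2) \<longrightarrow>
       J_int 2 lam = 1 / ((1 + 2*lam) * (2 + 2*lam))) \<and>
    (simplex_integrable 3 (I_exp lam 3) \<longrightarrow>
       I_int 3 lam = 1 / ((2 + 8*lam) * (3 + 8*lam)) *
         (Gamma (1 + 2*lam) ^ 2 / Gamma (2 + 4*lam))) \<and>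
    (simplex_integrable 4 (I_exp lam 4) \<longrightarrow>
       I_int 4 lam = 1 / ((3 + 22*lam) * (4 + 22*lam)) *
         (Gamma (1 + 2*lam) ^ 2 / Gamma (2 + 4*lam)) *
         (Gamma (1 + 2*lam) * Gamma (2 + 8*lam) / Gamma (3 + 10*lam)) *
         hyp3F2 (-4*lam) (1 + 2*lam) (2 + 8*lam) (2 + 4*lam) (3 + 10*lam) 1) \<and>
    (simplex_integrable 3 (J_exp lam 3) \<longrightarrow>
       J_int 3 lam = 1 / ((2 + 10*lam) * (3 + 10*lam)) *
         (Gamma (1 + 4*lam) ^ 2 / Gamma (2 + 8*lam))) \<and>
    (simplex_integrable 4 (J_exp lam 4) \<longrightarrow>
       J_int 4 lam = 1 / ((3 + 34*lam) * (4 + 34*lam)) *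
         (Gamma (1 + 8*lam) ^ 2 / Gamma (2 + 16*lam)) *
         (Gamma (1 + 8*lam) * Gamma (2 + 20*lam) / Gamma (3 + 28*lam)) *
         hyp3F2 (-4*lam) (1 + 8*lam) (2 + 20*lam) (2 + 16*lam) (3 + 28*lam) 1)"
  using thmI2[of lam] thmJ2[of lam] thmI3[of lam] thmI4[of lam] thmJ3[of lam] thmJ4[of lam]
  by blast

end
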